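(* Let $g(n,k)$ be the number of $k$-faces of $I(\mathfrak{gl}_n,V\oplus\bigwedge^2)$ for $n,k\ge0$, and set $g(n,k)=0$ if $n<0$ or $k\notin[0,n]$. Then for all $n\ge 2$ and all $k$, \[ g(n,k)=2g(n-1,k)-g(n-2,k)+2g(n-1,k-1)-g(n-2,k-1). \]
   Context: Identify the diagonal Cartan subalgebra of $\mathfrak{gl}_n$ with $\mathbb{R}^n$ with coordinates $x_1,\dots,x_n$. Let $W=\{x_1\ge\cdots\ge x_n\}$ and $W^0=\{x_1>\cdots>x_n\}$. For $1\le i\le j\le n$ let $\lambda_{i,j}^\perp$ be the hyperplane $x_i+x_j=0$ (for $i=j$: $x_i=0$). The arrangement $I(\mathfrak{gl}_n,V\oplus\bigwedge^2)$ consists of these hyperplanes restricted to $W$. Its chambers are the closures of the connected components of $W^0\setminus\bigcup\lambda_{i,j}^\perp$; a face is a chamber or the intersection of a chamber with a supporting hyperplane; a $k$-face is a face whose linear span has dimension $k$. *)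

theory Defs
  imports "HOL-Analysis.Analysis" "HOL-Library.Function_Algebras"
begin

text \<open>Points of R^n are modelled as functions nat => real vanishing at indices >= n;
  coordinate x_{i+1} of the paper is x i here.  The topology is the product topology
  on nat => real (which induces the Euclidean topology on the closed subspace R^n).\<close>

definition Rn :: "nat \<Rightarrow> (nat \<Rightarrow> real) set" where
  "Rn n = {x. \<forall>i\<ge>n. x i = 0}"

definition Wcl :: "nat \<Rightarrow> (nat \<Rightarrow> real) set" where
  "Wcl n = {x \<in> Rn n. \<forall>i j. i \<le> j \<and> j < n \<longrightarrow> x j \<le> x i}"

definition W0 :: "nat \<Rightarrow> (nat \<Rightarrow> real) set" where
  "W0 n = {x \<in> Rn n. \<forall>i j. i < j \<and> j < n \<longrightarrow> x j < x i}"

definition lam_perp :: "nat \<Rightarrow> nat \<Rightarrow> nat \<Rightarrow> (nat \<Rightarrow> real) set" where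
  "lam_perp n i j = (if i = j then {x \<in> Rn n. x i = 0} else {x \<in> Rn n. x i + x j = 0})"

definition arr_hyps :: "nat \<Rightarrow> (nat \<Rightarrow> real) set set" where
  "arr_hyps n = {lam_perp n i j | i j. i \<le> j \<and> j < n}"

definition chambers :: "nat \<Rightarrow> (nat \<Rightarrow> real) set set" where
  "chambers n = {closure (connected_component_set (W0 n - \<Union>(arr_hyps n)) x) | x.
                   x \<in> W0 n - \<Union>(arr_hyps n)}"

definition supporting_hyperplane :: "nat \<Rightarrow> (nat \<Rightarrow> real) set \<Rightarrow> (nat \<Rightarrow> real) set \<Rightarrow> bool" where
  "supporting_hyperplane n C H \<longleftrightarrow>
     (\<exists>a \<in> Rn n. a \<noteq> 0 \<and>
        H = {x \<in> Rn n. (\<Sum>i<n. a i * x i) = 0} \<and>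
        C \<subseteq> {x. (\<Sum>i<n. a i * x i) \<ge> 0} \<and> C \<inter> H \<noteq> {})"

definition faces :: "nat \<Rightarrow> (nat \<Rightarrow> real) set set" where
  "faces n = chambers n \<union>
     {C \<inter> H | C H. C \<in> chambers n \<and> supporting_hyperplane n C H}"

definition span_dim :: "(nat \<Rightarrow> real) set \<Rightarrow> nat" where
  "span_dim F = vector_space.dim (\<lambda>(c::real) (f::nat \<Rightarrow> real) i. c * f i) F"

definition num_faces :: "nat \<Rightarrow> nat \<Rightarrow> nat" where
  "num_faces n k = card {F \<in> faces n. span_dim F = k}"

definition g :: "int \<Rightarrow> int \<Rightarrow> int" where
  "g n k = (if n < 0 \<or> k < 0 \<or> k > n then 0 else int (num_faces (nat n) (nat k)))"

end

theory Submission
  imports Defs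
begin

definition Rr :: "real \<Rightarrow> real \<Rightarrow> bool" where
  "Rr a b \<longleftrightarrow> (a = 0 \<longrightarrow> b = 0) \<and> (a > 0 \<longrightarrow> b \<ge> 0) \<and> (a < 0 \<longrightarrow> b \<le> 0)"

definition compat :: "nat \<Rightarrow> (nat \<Rightarrow> real) \<Rightarrow> (nat \<Rightarrow> real) \<Rightarrow> bool" where
  "compat n x y \<longleftrightarrow> (\<forall>i<n. \<forall>j<n. Rr (x i + x j) (y i + y j) \<and> Rr (x i - x j) (y i - y j))"

definition FC :: "nat \<Rightarrow> (nat \<Rightarrow> real) \<Rightarrow> (nat \<Rightarrow> real) set" where
  "FC n x = {y \<in> Rn n. compat n x y}"

definition same :: "nat \<Rightarrow> (nat \<Rightarrow> real) \<Rightarrow> (nat \<Rightarrow> real) \<Rightarrow> bool" where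
  "same n x y \<longleftrightarrow> (\<forall>i<n. \<forall>j<n. sgn (x i + x j) = sgn (y i + y j) \<and> sgn (x i - x j) = sgn (y i - y j))"

lemma Rr_refl: "Rr a a" by (auto simp: Rr_def)
lemma Rr_trans: "Rr a b \<Longrightarrow> Rr b c \<Longrightarrow> Rr a c" by (auto simp: Rr_def)
lemma Rr_sgn: "sgn a = sgn a' \<Longrightarrow> Rr a b = Rr a' b"
  by (auto simp: Rr_def sgn_if split: if_splits)
lemma Rr_antisym: "Rr a b \<Longrightarrow> Rr b a \<Longrightarrow> sgn a = sgn b"
  by (auto simp: Rr_def sgn_if)

lemma compat_refl: "compat n x x" by (simp add: compat_def Rr_refl)
lemma compat_trans: "compat n x y \<Longrightarrow> compat n y z \<Longrightarrow> compat n x z"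
  unfolding compat_def by (meson Rr_trans)
lemma same_compat: "same n x x' \<Longrightarrow> compat n x y = compat n x' y"
  unfolding same_def compat_def using Rr_sgn by metis
lemma same_FC: "same n x x' \<Longrightarrow> FC n x = FC n x'"
  unfolding FC_def using same_compat by blast
lemma same_sym: "same n x y \<Longrightarrow> same n y x" unfolding same_def by metis
lemma FC_same: assumes "x \<in> Rn n" "y \<in> Rn n" "FC n x = FC n y" shows "same n x y"
proof -
  have "x \<in> FC n y" "y \<in> FC n x" using assms compat_refl unfolding FC_def by blast+
  hence "compat n y x" "compat n x y" unfolding FC_def by auto
  thus ?thesis unfolding compat_def same_def using Rr_antisym by metis
qed

lemma FC_Wcl: assumes "x \<in> Wcl n" shows "FC n x \<subseteq> Wcl n"
proof
  fix y assume y: "y \<in> FC n x"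
  { fix i j assume ij: "i \<le> j" "j < n"
    have "x j \<le> x i" using assms ij unfolding Wcl_def by auto
    moreover have "Rr (x i - x j) (y i - y j)" using y ij unfolding FC_def compat_def by auto
    ultimately have "y j \<le> y i" unfolding Rr_def by (cases "x i - x j = 0") auto }
  thus "y \<in> Wcl n" using y unfolding Wcl_def FC_def by auto
qed

lemma compat_same: "same n x x' \<Longrightarrow> compat n x y \<Longrightarrow> compat n x' y" using same_compat by blast

definition generic :: "nat \<Rightarrow> (nat \<Rightarrow> real) \<Rightarrow> bool" where
  "generic n x \<longleftrightarrow> x \<in> W0 n - \<Union>(arr_hyps n)"

definition OC :: "nat \<Rightarrow> (nat \<Rightarrow> real) \<Rightarrow> (nat \<Rightarrow> real) set" where
  "OC n x = {y \<in> Rn n. same n x y}"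

lemma mem_lam: "x \<in> Rn n \<Longrightarrow> x \<in> lam_perp n i j \<longleftrightarrow> (if i = j then x i = 0 else x i + x j = 0)"
  by (simp add: lam_perp_def)

lemma lam_in: "i \<le> j \<Longrightarrow> j < n \<Longrightarrow> lam_perp n i j \<in> arr_hyps n"
  unfolding arr_hyps_def by blast

lemma generic_iff: "generic n x \<longleftrightarrow> x \<in> W0 n \<and> (\<forall>i<n. \<forall>j<n. x i + x j \<noteq> 0)"
proof
  assume g: "generic n x"
  hence x: "x \<in> W0 n" unfolding generic_def by auto
  hence xr: "x \<in> Rn n" unfolding W0_def by auto
  have nl: "x \<notin> lam_perp n a b" if "a \<le> b" "b < n" for a b
    using g lam_in[OF that] unfolding generic_def by blast
  have "x i + x j \<noteq> 0" if ij: "i<n" "j<n" for i j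
  proof (cases "i \<le> j")
    case True
    have "x \<notin> lam_perp n i j" using nl True ij by blast
    hence "\<not> (if i = j then x i = 0 else x i + x j = 0)" using mem_lam[OF xr] by blast
    thus ?thesis by (cases "i = j") auto
  next
    case False
    hence ji: "j \<le> i" by simp
    have "x \<notin> lam_perp n j i" using nl ji ij by blast
    hence "\<not> (if j = i then x j = 0 else x j + x i = 0)" using mem_lam[OF xr] by blast
    thus ?thesis using False by (simp add: add.commute)
  qed
  thus "x \<in> W0 n \<and> (\<forall>i<n. \<forall>j<n. x i + x j \<noteq> 0)" using x by blast
next
  assume a: "x \<in> W0 n \<and> (\<forall>i<n. \<forall>j<n. x i + x j \<noteq> 0)"
  hence xr: "x \<in> Rn n" unfolding W0_def by auto
  have "x \<notin> lam_perp n i j" if "i \<le> j" "j < n" for i j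
  proof -
    have "i < n" using that by simp
    hence "x i + x j \<noteq> 0" "x i + x i \<noteq> 0" using a that by blast+
    hence "x i \<noteq> 0" "x i + x j \<noteq> 0" by auto
    hence "\<not> (if i = j then x i = 0 else x i + x j = 0)" by (cases "i = j") auto
    thus ?thesis using mem_lam[OF xr] by blast
  qed
  hence "x \<notin> \<Union>(arr_hyps n)" unfolding arr_hyps_def by blast
  thus "generic n x" using a unfolding generic_def by blast
qed

lemma generic_W0: "generic n x \<Longrightarrow> x \<in> W0 n" by (simp add: generic_iff)
lemma W0_Wcl: "W0 n \<subseteq> Wcl n" unfolding W0_def Wcl_def by (auto simp: le_less)
lemma W0_Rn: "W0 n \<subseteq> Rn n" unfolding W0_def by auto

lemma generic_minus: assumes g: "generic n x" and ij: "i < n" "j < n" "i \<noteq> j" shows "x i - x j \<noteq> 0"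
proof -
  have w: "\<forall>i j. i < j \<and> j < n \<longrightarrow> x j < x i" using generic_W0[OF g] unfolding W0_def by blast
  show ?thesis
  proof (cases "i < j")
    case True thus ?thesis using w ij by force
  next
    case False hence "j < i" using ij by simp
    thus ?thesis using w ij by force
  qed
qed

lemma sgn_const_connected:
  fixes f :: "'a::topological_space \<Rightarrow> real"
  assumes "connected C" "continuous_on C f" "\<forall>z\<in>C. f z \<noteq> 0" "x \<in> C" "y \<in> C"
  shows "sgn (f x) = sgn (f y)"
proof (rule ccontr)
  assume ne: "sgn (f x) \<noteq> sgn (f y)"
  have "connected (f ` C)" using assms connected_continuous_image by blast
  hence iv: "is_interval (f ` C)" using is_interval_connected_1 by blast
  have fx: "f x \<noteq> 0" "f y \<noteq> 0" using assms by auto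
  have "0 \<in> f ` C"
  proof (cases "f x < 0")
    case True
    hence "f y > 0" using ne fx by (auto simp: sgn_if split: if_splits)
    thus ?thesis using iv True assms(4,5) unfolding is_interval_1 by (meson imageI less_eq_real_def)
  next
    case False
    hence "f x > 0" "f y < 0" using ne fx by (auto simp: sgn_if split: if_splits)
    thus ?thesis using iv assms(4,5) unfolding is_interval_1 by (meson imageI less_eq_real_def)
  qed
  thus False using assms(3) by auto
qed

lemma pos_comb: fixes a b t :: real assumes "a > 0" "b > 0" "0 \<le> t" "t \<le> 1"
  shows "(1 - t) * a + t * b > 0"
proof (cases "t < 1")
  case True
  have "(1 - t) * a > 0" using True assms by simp
  moreover have "t * b \<ge> 0" using assms by simp
  ultimately show ?thesis by linarith
next
  case False thus ?thesis using assms by simp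
qed

lemma sgn_comb:
  fixes a b t :: real
  assumes "sgn a = sgn b" "0 \<le> t" "t \<le> 1"
  shows "sgn ((1 - t) * a + t * b) = sgn a"
proof -
  consider "a > 0" "b > 0" | "a = 0" "b = 0" | "a < 0" "b < 0" using assms(1)
    by (cases a "0::real" rule: linorder_cases; cases b "0::real" rule: linorder_cases) (auto simp: sgn_if)
  thus ?thesis
  proof cases
    case 1
    thus ?thesis using pos_comb[OF 1 assms(2,3)] by simp
  next
    case 3
    hence "-a > 0" "-b > 0" by auto
    from pos_comb[OF this assms(2,3)] have "(1 - t) * a + t * b < 0" by simp
    thus ?thesis using 3 by simp
  qed auto
qed

lemma continuous_coord2 [continuous_intros]:
  "continuous_on S (\<lambda>z::nat\<Rightarrow>real. z i + z j)" "continuous_on S (\<lambda>z::nat\<Rightarrow>real. z i - z j)"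
  by (intro continuous_intros continuous_on_subset[OF continuous_on_product_coordinates] subset_UNIV)+

lemma component_eq:
  assumes g: "generic n x"
  shows "connected_component_set (W0 n - \<Union>(arr_hyps n)) x = OC n x"
proof
  let ?S = "W0 n - \<Union>(arr_hyps n)"
  have gS: "\<And>z. z \<in> ?S \<longleftrightarrow> generic n z" unfolding generic_def by simp
  show "connected_component_set ?S x \<subseteq> OC n x"
  proof
    fix y assume y: "y \<in> connected_component_set ?S x"
    let ?C = "connected_component_set ?S x"
    have C: "connected ?C" "?C \<subseteq> ?S" "x \<in> ?C"
      using connected_connected_component connected_component_subset g gS
      by (auto simp: connected_component_refl_eq)
    have Cg: "\<And>z. z \<in> ?C \<Longrightarrow> generic n z" using C(2) gS by blast
    have yS: "generic n y" using y Cg by blast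
    have "same n x y" unfolding same_def
    proof (intro allI impI conjI)
      fix i j assume ij: "i < n" "j < n"
      have nz: "\<forall>z\<in>?C. z i + z j \<noteq> 0" using Cg ij unfolding generic_iff by blast
      show "sgn (x i + x j) = sgn (y i + y j)"
        by (rule sgn_const_connected[OF C(1) continuous_coord2(1) nz C(3) y])
      show "sgn (x i - x j) = sgn (y i - y j)"
      proof (cases "i = j")
        case False
        have nz: "\<forall>z\<in>?C. z i - z j \<noteq> 0" using Cg ij False generic_minus by blast
        show ?thesis
          by (rule sgn_const_connected[OF C(1) continuous_coord2(2) nz C(3) y])
      qed simp
    qed
    thus "y \<in> OC n x" using yS W0_Rn unfolding OC_def generic_iff by auto
  qed
next
  let ?S = "W0 n - \<Union>(arr_hyps n)"
  have gS: "\<And>z. z \<in> ?S \<longleftrightarrow> generic n z" unfolding generic_def by simp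
  show "OC n x \<subseteq> connected_component_set ?S x"
  proof
    fix y assume y: "y \<in> OC n x"
    define p where "p = (\<lambda>t::real. \<lambda>i. (1 - t) * x i + t * y i)"
    have xr: "x \<in> Rn n" using g generic_W0 W0_Rn by auto
    have yr: "y \<in> Rn n" using y unfolding OC_def by auto
    have sm: "same n x y" using y unfolding OC_def by auto
    have pS: "p t \<in> ?S" if t: "t \<in> {0..1}" for t
    proof -
      have eq1: "p t i + p t j = (1 - t) * (x i + x j) + t * (y i + y j)" for i j
        unfolding p_def by algebra
      have eq2: "p t i - p t j = (1 - t) * (x i - x j) + t * (y i - y j)" for i j
        unfolding p_def by algebra
      have s1: "sgn (p t i + p t j) = sgn (x i + x j)" if "i<n" "j<n" for i j
        unfolding eq1 using sgn_comb sm that t unfolding same_def by auto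
      have s2: "sgn (p t i - p t j) = sgn (x i - x j)" if "i<n" "j<n" for i j
        unfolding eq2 using sgn_comb sm that t unfolding same_def by auto
      have "p t \<in> Rn n" using xr yr unfolding Rn_def p_def by auto
      moreover have "\<forall>i j. i < j \<and> j < n \<longrightarrow> p t j < p t i"
      proof (intro allI impI)
        fix i j assume ij: "i < j \<and> j < n"
        have "x i - x j > 0" using g ij unfolding generic_iff W0_def by auto
        hence "sgn (p t i - p t j) = 1" using s2[of i j] ij by auto
        thus "p t j < p t i" by (simp add: sgn_if split: if_splits)
      qed
      moreover have "\<forall>i<n. \<forall>j<n. p t i + p t j \<noteq> 0"
      proof (intro allI impI)
        fix i j assume ij: "i < n" "j < n"
        have "x i + x j \<noteq> 0" using g ij by (simp add: generic_iff)
        hence "sgn (p t i + p t j) \<noteq> 0" using s1[OF ij] by (simp add: sgn_if)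
        thus "p t i + p t j \<noteq> 0" by auto
      qed
      ultimately have "p t \<in> W0 n \<and> (\<forall>i<n. \<forall>j<n. p t i + p t j \<noteq> 0)" unfolding W0_def by blast
      thus ?thesis using gS generic_iff by blast
    qed
    have cp: "continuous_on {0..1} p" unfolding p_def by (intro continuous_intros)
    have "p ` {0..1} \<subseteq> connected_component_set ?S (p 0)"
      apply (rule connected_component_maximal)
      using pS connected_continuous_image[OF cp] by (auto intro: imageI)
    moreover have "p 0 = x" "p 1 = y" unfolding p_def by auto
    moreover have "p 1 \<in> p ` {0..1}" by (rule imageI) simp
    ultimately show "y \<in> connected_component_set ?S x" by auto
  qed
qed

lemma closed_Rr:
  fixes f :: "(nat \<Rightarrow> real) \<Rightarrow> real"
  assumes f: "continuous_on UNIV f" shows "closed {y. Rr a (f y)}"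
proof -
  consider "a = 0" | "a > 0" | "a < 0" by linarith
  thus ?thesis
  proof cases
    case 1
    hence "{y. Rr a (f y)} = {y. f y = 0}" by (auto simp: Rr_def)
    thus ?thesis using closed_Collect_eq[OF f continuous_on_const] by simp
  next
    case 2
    hence "{y. Rr a (f y)} = {y. 0 \<le> f y}" by (auto simp: Rr_def)
    thus ?thesis using closed_Collect_le[OF continuous_on_const f] by simp
  next
    case 3
    hence "{y. Rr a (f y)} = {y. f y \<le> 0}" by (auto simp: Rr_def)
    thus ?thesis using closed_Collect_le[OF f continuous_on_const] by simp
  qed
qed

lemma closed_const_imp: "closed {y. Q y} \<Longrightarrow> closed {y. P \<longrightarrow> Q y}"
  by (cases P) auto

lemma closed_Rn: "closed (Rn n)"
proof -
  have "Rn n = {y. \<forall>i. n \<le> i \<longrightarrow> y i = 0}" unfolding Rn_def by auto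
  moreover have "closed {y::nat\<Rightarrow>real. \<forall>i. n \<le> i \<longrightarrow> y i = 0}"
    by (intro closed_Collect_all closed_const_imp closed_Collect_eq continuous_on_product_coordinates continuous_on_const)
  ultimately show ?thesis by simp
qed

lemma closed_FC: "closed (FC n x)"
proof -
  have "FC n x = Rn n \<inter> {y. \<forall>i. i < n \<longrightarrow> (\<forall>j. j < n \<longrightarrow> Rr (x i + x j) (y i + y j) \<and> Rr (x i - x j) (y i - y j))}"
    unfolding FC_def compat_def by auto
  moreover have "closed {y. \<forall>i. i < n \<longrightarrow> (\<forall>j. j < n \<longrightarrow> Rr (x i + x j) (y i + y j) \<and> Rr (x i - x j) (y i - y j))}"
    by (intro closed_Collect_all closed_const_imp closed_Collect_conj closed_Rr continuous_coord2)
  ultimately show ?thesis using closed_Rn by auto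
qed

lemma same_imp_compat: "same n x y \<Longrightarrow> compat n x y"
  unfolding same_def compat_def by (metis Rr_refl Rr_sgn)

lemma OC_FC: "OC n x \<subseteq> FC n x"
  unfolding OC_def FC_def using same_imp_compat by blast

lemma Rr_comb: fixes a b t :: real assumes "Rr a b" "0 < t" "t \<le> 1"
  shows "sgn ((1 - t) * b + t * a) = sgn a"
proof -
  consider "a > 0" "b \<ge> 0" | "a = 0" "b = 0" | "a < 0" "b \<le> 0" using assms(1) unfolding Rr_def
    by (cases a "0::real" rule: linorder_cases) auto
  thus ?thesis
  proof cases
    case 1
    have "(1 - t) * b \<ge> 0" using 1 assms by simp
    moreover have "t * a > 0" using 1 assms by simp
    ultimately have "(1 - t) * b + t * a > 0" by linarith
    thus ?thesis using 1 by simp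
  next
    case 3
    have "(1 - t) * b \<le> 0" using 3 assms by (simp add: mult_nonneg_nonpos)
    moreover have "t * a < 0" using 3 assms by (simp add: mult_pos_neg)
    ultimately have "(1 - t) * b + t * a < 0" by linarith
    thus ?thesis using 3 by simp
  qed auto
qed

lemma closure_OC:
  assumes g: "generic n x"
  shows "closure (OC n x) = FC n x"
proof
  show "closure (OC n x) \<subseteq> FC n x" using closure_minimal[OF OC_FC closed_FC] .
  show "FC n x \<subseteq> closure (OC n x)"
  proof
    fix y assume y: "y \<in> FC n x"
    have xr: "x \<in> Rn n" using g generic_W0 W0_Rn by auto
    have yr: "y \<in> Rn n" and cp: "compat n x y" using y unfolding FC_def by auto
    define p where "p = (\<lambda>t::real. \<lambda>i. (1 - t) * y i + t * x i)"
    have "p t \<in> OC n x" if t: "t \<in> {0<..1}" for t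
    proof -
      have eq1: "p t i + p t j = (1 - t) * (y i + y j) + t * (x i + x j)" for i j
        unfolding p_def by algebra
      have eq2: "p t i - p t j = (1 - t) * (y i - y j) + t * (x i - x j)" for i j
        unfolding p_def by algebra
      have "same n x (p t)" unfolding same_def
      proof (intro allI impI conjI)
        fix i j assume ij: "i < n" "j < n"
        show "sgn (x i + x j) = sgn (p t i + p t j)" unfolding eq1
          using Rr_comb[of "x i + x j" "y i + y j" t] cp ij t unfolding compat_def by auto
        show "sgn (x i - x j) = sgn (p t i - p t j)" unfolding eq2
          using Rr_comb[of "x i - x j" "y i - y j" t] cp ij t unfolding compat_def by auto
      qed
      moreover have "p t \<in> Rn n" using xr yr unfolding Rn_def p_def by auto
      ultimately show ?thesis unfolding OC_def by auto
    qed
    hence sub: "p ` {0<..1} \<subseteq> closure (OC n x)" using closure_subset by blast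
    have cpp: "continuous_on (closure {0<..1}) p" unfolding p_def by (intro continuous_intros)
    have "p ` closure {0<..1} \<subseteq> closure (OC n x)"
      by (rule image_closure_subset[OF cpp closed_closure sub])
    moreover have "(0::real) \<in> closure {0<..1}" by simp
    moreover have "p 0 = y" unfolding p_def by simp
    ultimately show "y \<in> closure (OC n x)" by blast
  qed
qed

lemma chambers_eq: "chambers n = FC n ` {x. generic n x}"
proof -
  have "chambers n = {closure (connected_component_set (W0 n - \<Union>(arr_hyps n)) x) | x. generic n x}"
    unfolding chambers_def generic_def by simp
  also have "\<dots> = {FC n x | x. generic n x}" using component_eq closure_OC by metis
  finally show ?thesis by blast
qed

definition lf :: "bool \<Rightarrow> nat \<Rightarrow> nat \<Rightarrow> (nat \<Rightarrow> real) \<Rightarrow> real" where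
  "lf b i j y = (if b then y i + y j else y i - y j)"

lemma compat_lf: "compat n x y \<longleftrightarrow> (\<forall>b i j. i < n \<longrightarrow> j < n \<longrightarrow> Rr (lf b i j x) (lf b i j y))"
proof
  assume c: "compat n x y"
  show "\<forall>b i j. i < n \<longrightarrow> j < n \<longrightarrow> Rr (lf b i j x) (lf b i j y)"
  proof (intro allI impI)
    fix b i j assume "i < n" "j < n"
    thus "Rr (lf b i j x) (lf b i j y)" using c unfolding compat_def lf_def by (cases b) auto
  qed
next
  assume c: "\<forall>b i j. i < n \<longrightarrow> j < n \<longrightarrow> Rr (lf b i j x) (lf b i j y)"
  show "compat n x y" unfolding compat_def
  proof (intro allI impI conjI)
    fix i j assume ij: "i < n" "j < n"
    show "Rr (x i + x j) (y i + y j)" using c[rule_format, OF ij, of True] by (simp add: lf_def)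
    show "Rr (x i - x j) (y i - y j)" using c[rule_format, OF ij, of False] by (simp add: lf_def)
  qed
qed

lemma same_lf: "same n x y \<longleftrightarrow> (\<forall>b i j. i < n \<longrightarrow> j < n \<longrightarrow> sgn (lf b i j x) = sgn (lf b i j y))"
proof
  assume c: "same n x y"
  show "\<forall>b i j. i < n \<longrightarrow> j < n \<longrightarrow> sgn (lf b i j x) = sgn (lf b i j y)"
  proof (intro allI impI)
    fix b i j assume "i < n" "j < n"
    thus "sgn (lf b i j x) = sgn (lf b i j y)" using c unfolding same_def lf_def by (cases b) auto
  qed
next
  assume c: "\<forall>b i j. i < n \<longrightarrow> j < n \<longrightarrow> sgn (lf b i j x) = sgn (lf b i j y)"
  show "same n x y" unfolding same_def
  proof (intro allI impI conjI)
    fix i j assume ij: "i < n" "j < n"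
    show "sgn (x i + x j) = sgn (y i + y j)" using c[rule_format, OF ij, of True] by (simp add: lf_def)
    show "sgn (x i - x j) = sgn (y i - y j)" using c[rule_format, OF ij, of False] by (simp add: lf_def)
  qed
qed

lemma lf_comb: "lf b i j (\<lambda>m. u m + e * v m) = lf b i j u + e * lf b i j v"
  unfolding lf_def by (auto simp: algebra_simps)

lemma lf_add: "lf b i j (\<lambda>m. u m + v m) = lf b i j u + lf b i j v"
  unfolding lf_def by (auto simp: algebra_simps)

lemma ev_sgn:
  fixes c d :: real assumes "c \<noteq> 0"
  shows "eventually (\<lambda>e. sgn (c + e * d) = sgn c) (at_right 0)"
proof -
  have t: "((\<lambda>e. c + e * d) \<longlongrightarrow> c) (at_right 0)"
  proof -
    have "((\<lambda>e::real. c + e * d) \<longlongrightarrow> c + 0 * d) (at_right 0)"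
      by (intro tendsto_intros)
    thus ?thesis by simp
  qed
  show ?thesis
  proof (cases "c > 0")
    case True
    have "eventually (\<lambda>e. 0 < c + e * d) (at_right 0)" using order_tendstoD(1)[OF t True] .
    thus ?thesis by eventually_elim (use True in simp)
  next
    case False hence c: "c < 0" using assms by simp
    have "eventually (\<lambda>e. c + e * d < 0) (at_right 0)" using order_tendstoD(2)[OF t c] .
    thus ?thesis by eventually_elim (use c in simp)
  qed
qed

definition forms :: "nat \<Rightarrow> (bool \<times> nat \<times> nat) set" where
  "forms n = UNIV \<times> {..<n} \<times> {..<n}"

lemma finite_forms: "finite (forms n)" unfolding forms_def by simp

lemma ev_forms:
  fixes z v :: "nat \<Rightarrow> real"
  shows "\<exists>e>0. \<forall>(b,i,j)\<in>forms n. lf b i j z \<noteq> 0 \<longrightarrow> sgn (lf b i j z + e * lf b i j v) = sgn (lf b i j z)"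
proof -
  define Q where "Q = (\<lambda>f (e::real). case f of (b,i,j) \<Rightarrow> lf b i j z \<noteq> 0 \<longrightarrow> sgn (lf b i j z + e * lf b i j v) = sgn (lf b i j z))"
  have ev: "\<forall>f\<in>forms n. eventually (Q f) (at_right 0)"
  proof
    fix f assume "f \<in> forms n"
    obtain b i j where f: "f = (b,i,j)" by (cases f) auto
    show "eventually (Q f) (at_right 0)"
    proof (cases "lf b i j z = 0")
      case True thus ?thesis unfolding f Q_def by simp
    next
      case False
      show ?thesis unfolding f Q_def using ev_sgn[OF False, of "lf b i j v"] by simp
    qed
  qed
  have "eventually (\<lambda>e. 0 < e \<and> (\<forall>f\<in>forms n. Q f e)) (at_right 0)"
    using eventually_conj[OF eventually_at_right_less eventually_ball_finite[OF finite_forms ev]] .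
  then obtain e where e: "0 < e" "\<forall>f\<in>forms n. Q f e"
    using eventually_happens[of _ "at_right (0::real)"] trivial_limit_at_right_real by blast
  show ?thesis
    apply (rule exI[of _ e])
    using e unfolding Q_def by auto
qed

definition dotp :: "nat \<Rightarrow> (nat \<Rightarrow> real) \<Rightarrow> (nat \<Rightarrow> real) \<Rightarrow> real" where
  "dotp n a y = (\<Sum>i<n. a i * y i)"

lemma dotp_comb: "dotp n a (\<lambda>m. u m + e * v m) = dotp n a u + e * dotp n a v"
  unfolding dotp_def by (simp add: algebra_simps sum.distrib sum_distrib_left)

lemma dotp_add: "dotp n a (\<lambda>m. u m + v m) = dotp n a u + dotp n a v"
  unfolding dotp_def by (simp add: algebra_simps sum.distrib)

lemma lf_diff: "lf b i j (\<lambda>m. u m - v m) = lf b i j u - lf b i j v"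
  unfolding lf_def by (auto simp: algebra_simps)

lemma Rr_add: "Rr a b \<Longrightarrow> Rr a c \<Longrightarrow> Rr a (b + c)" by (auto simp: Rr_def)
lemma Rr_add0: "Rr a b \<Longrightarrow> Rr a c \<Longrightarrow> (b + c = 0 \<longleftrightarrow> b = 0 \<and> c = 0)" by (auto simp: Rr_def)
lemma Rr_nz: "Rr a b \<Longrightarrow> b \<noteq> 0 \<Longrightarrow> sgn a = sgn b" by (auto simp: Rr_def sgn_if)
lemma Rr_0: "Rr a 0" by (simp add: Rr_def)
lemma Rr_of_sgn: "sgn a = sgn b \<Longrightarrow> Rr a b" using Rr_sgn Rr_refl by metis

definition supp :: "nat \<Rightarrow> (nat \<Rightarrow> real) \<Rightarrow> (bool \<times> nat \<times> nat) set" where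
  "supp n y = {f \<in> forms n. case f of (b,i,j) \<Rightarrow> lf b i j y \<noteq> 0}"

lemma supp_sub: "supp n y \<subseteq> forms n" unfolding supp_def by auto
lemma finite_supp: "finite (supp n y)" using finite_subset[OF supp_sub finite_forms] .

lemma face_A:
  assumes g: "generic n x" and sh: "supporting_hyperplane n (FC n x) H"
  shows "\<exists>z\<in>Wcl n. FC n x \<inter> H = FC n z"
proof -
  obtain a where a: "a \<in> Rn n" "a \<noteq> 0" "H = {y \<in> Rn n. dotp n a y = 0}"
      "FC n x \<subseteq> {y. dotp n a y \<ge> 0}" "FC n x \<inter> H \<noteq> {}"
    using sh unfolding supporting_hyperplane_def dotp_def by blast
  define K where "K = FC n x \<inter> H"
  obtain z0 where z0: "z0 \<in> K" using a(5) unfolding K_def by blast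
  have bnd: "\<forall>y. y \<in> K \<longrightarrow> card (supp n y) < card (forms n) + 1"
    using card_mono[OF finite_forms supp_sub] by (simp add: less_Suc_eq_le)
  obtain z where zK: "z \<in> K" and zmax: "\<And>y. y \<in> K \<Longrightarrow> card (supp n y) \<le> card (supp n z)"
    using Lattices_Big.ex_has_greatest_nat[of "\<lambda>y. y \<in> K" z0 "\<lambda>y. card (supp n y)", OF z0 bnd] by blast
  have zx: "compat n x z" and zr: "z \<in> Rn n" and za: "dotp n a z = 0"
    using zK a(3) unfolding K_def FC_def by auto
  have xW: "x \<in> Wcl n" using g generic_W0 W0_Wcl by blast
  have "FC n z \<subseteq> K"
  proof
    fix y assume y: "y \<in> FC n z"
    have zy: "compat n z y" and yr: "y \<in> Rn n" using y unfolding FC_def by auto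
    have yx: "y \<in> FC n x" using compat_trans[OF zx zy] yr unfolding FC_def by auto
    hence ge: "dotp n a y \<ge> 0" using a(4) by auto
    obtain e where e: "e > 0" "\<forall>(b,i,j)\<in>forms n. lf b i j z \<noteq> 0 \<longrightarrow>
        sgn (lf b i j z + e * lf b i j (\<lambda>m. z m - y m)) = sgn (lf b i j z)"
      using ev_forms[of n z "\<lambda>m. z m - y m"] by blast
    define w where "w = (\<lambda>m. z m + e * (z m - y m))"
    have lw: "lf b i j w = lf b i j z + e * lf b i j (\<lambda>m. z m - y m)" for b i j
      unfolding w_def by (rule lf_comb)
    have "compat n z w" unfolding compat_lf
    proof (intro allI impI)
      fix b i j assume ij: "i < n" "j < n"
      show "Rr (lf b i j z) (lf b i j w)"
      proof (cases "lf b i j z = 0")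
        case True
        hence "lf b i j y = 0" using zy ij unfolding compat_lf Rr_def by blast
        thus ?thesis using True unfolding lw lf_diff by (simp add: Rr_def)
      next
        case False
        have "(b,i,j) \<in> forms n" using ij unfolding forms_def by auto
        hence "sgn (lf b i j w) = sgn (lf b i j z)" using e(2) False unfolding lw by auto
        thus ?thesis using Rr_of_sgn by metis
      qed
    qed
    moreover have "w \<in> Rn n" using zr yr unfolding w_def Rn_def by auto
    ultimately have "w \<in> FC n x" using compat_trans[OF zx] unfolding FC_def by auto
    hence "dotp n a w \<ge> 0" using a(4) by auto
    moreover have "dotp n a w = dotp n a z + e * (dotp n a z - dotp n a y)"
    proof -
      have "dotp n a w = dotp n a z + e * dotp n a (\<lambda>m. z m - y m)" unfolding w_def by (rule dotp_comb)
      moreover have "dotp n a (\<lambda>m. z m - y m) = dotp n a z - dotp n a y"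
        unfolding dotp_def by (simp add: algebra_simps sum_subtractf)
      ultimately show ?thesis by simp
    qed
    ultimately have "e * dotp n a y \<le> 0" using za by simp
    hence "dotp n a y \<le> 0" using e(1) by (simp add: mult_le_0_iff)
    hence "dotp n a y = 0" using ge by simp
    thus "y \<in> K" unfolding K_def using yx yr a(3) by auto
  qed
  moreover have "K \<subseteq> FC n z"
  proof
    fix y assume yK: "y \<in> K"
    have xy: "compat n x y" and yr: "y \<in> Rn n" and ya: "dotp n a y = 0"
      using yK a(3) unfolding K_def FC_def by auto
    define u where "u = (\<lambda>m. z m + y m)"
    have lu: "lf b i j u = lf b i j z + lf b i j y" for b i j unfolding u_def by (rule lf_add)
    have xu: "compat n x u" unfolding compat_lf lu
      using xy zx Rr_add unfolding compat_lf by blast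
    have ur: "u \<in> Rn n" using zr yr unfolding u_def Rn_def by auto
    have "dotp n a u = 0" unfolding u_def dotp_add using za ya by simp
    hence uK: "u \<in> K" unfolding K_def using xu ur a(3) unfolding FC_def by auto
    have "supp n u = supp n z \<union> supp n y"
    proof -
      have "lf b i j u = 0 \<longleftrightarrow> lf b i j z = 0 \<and> lf b i j y = 0" if "(b,i,j) \<in> forms n" for b i j
      proof -
        have ij: "i < n" "j < n" using that unfolding forms_def by auto
        show ?thesis unfolding lu using Rr_add0 xy zx ij unfolding compat_lf by blast
      qed
      thus ?thesis unfolding supp_def by auto
    qed
    hence "card (supp n z \<union> supp n y) \<le> card (supp n z)" using zmax[OF uK] by simp
    hence "supp n z \<union> supp n y = supp n z"
      using card_seteq[of "supp n z \<union> supp n y" "supp n z"] finite_supp by (metis Un_upper1 finite_Un)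
    hence sy: "supp n y \<subseteq> supp n z" by blast
    have "compat n z y" unfolding compat_lf
    proof (intro allI impI)
      fix b i j assume ij: "i < n" "j < n"
      have f: "(b,i,j) \<in> forms n" using ij unfolding forms_def by auto
      show "Rr (lf b i j z) (lf b i j y)"
      proof (cases "lf b i j z = 0")
        case True
        hence "(b,i,j) \<notin> supp n z" unfolding supp_def by auto
        hence "(b,i,j) \<notin> supp n y" using sy by blast
        hence "lf b i j y = 0" using f unfolding supp_def by auto
        thus ?thesis by (simp add: Rr_0)
      next
        case False
        have "sgn (lf b i j x) = sgn (lf b i j z)" using Rr_nz[OF _ False] zx ij unfolding compat_lf by blast
        moreover have "Rr (lf b i j x) (lf b i j y)" using xy ij unfolding compat_lf by blast
        ultimately show ?thesis using Rr_sgn by metis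
      qed
    qed
    thus "y \<in> FC n z" using yr unfolding FC_def by auto
  qed
  ultimately have "K = FC n z" by blast
  moreover have "z \<in> Wcl n" using zK FC_Wcl[OF xW] unfolding K_def by blast
  ultimately show ?thesis unfolding K_def by blast
qed

lemma delta_sum: assumes "i < (n::nat)" shows "(\<Sum>m<n. (if m = i then 1 else 0) * (y m::real)) = y i"
proof -
  have "(\<Sum>m<n. (if m = i then 1 else 0) * (y m::real)) = (\<Sum>m<n. if m = i then y m else 0)"
    by (rule sum.cong) auto
  also have "\<dots> = y i" using sum.delta[of "{..<n}" i y] assms by auto
  finally show ?thesis .
qed

definition coef :: "bool \<times> nat \<times> nat \<Rightarrow> nat \<Rightarrow> real" where
  "coef f m = (case f of (b,i,j) \<Rightarrow> if b then (if m = i then 1 else 0) + (if m = j then 1 else 0)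
                                   else (if m = i then 1 else 0) - (if m = j then 1 else 0))"

definition LL :: "bool \<times> nat \<times> nat \<Rightarrow> (nat \<Rightarrow> real) \<Rightarrow> real" where
  "LL f y = (case f of (b,i,j) \<Rightarrow> lf b i j y)"

lemma dotp_coef: assumes "f \<in> forms n" shows "dotp n (coef f) y = LL f y"
proof -
  obtain b i j where f: "f = (b,i,j)" by (cases f) auto
  have ij: "i < n" "j < n" using assms f unfolding forms_def by auto
  show ?thesis
  proof (cases b)
    case True
    thus ?thesis unfolding f dotp_def coef_def LL_def lf_def
      by (simp only: prod.case if_True distrib_right sum.distrib delta_sum[OF ij(1)] delta_sum[OF ij(2)])
  next
    case False
    thus ?thesis unfolding f dotp_def coef_def LL_def lf_def
      by (simp only: prod.case if_False left_diff_distrib sum_subtractf delta_sum[OF ij(1)] delta_sum[OF ij(2)])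
  qed
qed

lemma coef_zero: assumes "f \<in> forms n" "m \<ge> n" shows "coef f m = 0"
  using assms unfolding forms_def coef_def by auto

lemma face_B:
  assumes zW: "z \<in> Wcl n"
  shows "FC n z \<in> faces n"
proof -
  define w where "w = (\<lambda>i. if i < n then real (n - i) else 0)"
  obtain d where d: "d > 0" "\<forall>(b,i,j)\<in>forms n. lf b i j z \<noteq> 0 \<longrightarrow>
        sgn (lf b i j z + d * lf b i j w) = sgn (lf b i j z)"
    using ev_forms[of n z w] by blast
  define x where "x = (\<lambda>m. z m + d * w m)"
  have lx: "lf b i j x = lf b i j z + d * lf b i j w" for b i j unfolding x_def by (rule lf_comb)
  have zr: "z \<in> Rn n" using zW unfolding Wcl_def by auto
  have xr: "x \<in> Rn n" using zr unfolding x_def w_def Rn_def by auto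
  have pres: "sgn (lf b i j x) = sgn (lf b i j z)" if "i < n" "j < n" "lf b i j z \<noteq> 0" for b i j
    using d(2) that unfolding lx forms_def by auto
  have wpos: "lf True i j w > 0" if "i < n" "j < n" for i j using that unfolding w_def lf_def by auto
  have wmin: "lf False i j w > 0" if "i < j" "j < n" for i j using that unfolding w_def lf_def by auto
  have gx: "generic n x" unfolding generic_iff
  proof
    show "x \<in> W0 n" unfolding W0_def
    proof (intro CollectI conjI allI impI)
      show "x \<in> Rn n" by (rule xr)
      fix i j assume ij: "i < j \<and> j < n"
      have zz: "z j \<le> z i" using zW ij unfolding Wcl_def by auto
      show "x j < x i"
      proof (cases "lf False i j z = 0")
        case True
        have "lf False i j x > 0" unfolding lx using True wmin ij d(1) by simp
        thus ?thesis unfolding lf_def by simp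
      next
        case False
        hence "lf False i j z > 0" using zz unfolding lf_def by simp
        moreover have "sgn (lf False i j x) = sgn (lf False i j z)" using pres ij False by auto
        ultimately have "lf False i j x > 0" by (simp add: sgn_if split: if_splits)
        thus ?thesis unfolding lf_def by simp
      qed
    qed
    show "\<forall>i<n. \<forall>j<n. x i + x j \<noteq> 0"
    proof (intro allI impI)
      fix i j assume ij: "i < n" "j < n"
      show "x i + x j \<noteq> 0"
      proof (cases "lf True i j z = 0")
        case True
        have "lf True i j x > 0" unfolding lx using True wpos ij d(1) by simp
        thus ?thesis unfolding lf_def by simp
      next
        case False
        have "sgn (lf True i j x) = sgn (lf True i j z)" using pres ij False by auto
        hence "lf True i j x \<noteq> 0" using False by (auto simp: sgn_if split: if_splits)
        thus ?thesis unfolding lf_def by simp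
      qed
    qed
  qed
  have xz: "compat n x z" unfolding compat_lf
  proof (intro allI impI)
    fix b i j assume ij: "i < n" "j < n"
    show "Rr (lf b i j x) (lf b i j z)"
    proof (cases "lf b i j z = 0")
      case True thus ?thesis by (simp add: Rr_0)
    next
      case False thus ?thesis using pres[OF ij False] Rr_of_sgn by metis
    qed
  qed
  show ?thesis
  proof (cases "generic n z")
    case True
    hence "FC n z \<in> chambers n" using chambers_eq by blast
    thus ?thesis unfolding faces_def by blast
  next
    case ng: False
    define Z where "Z = {f \<in> forms n. LL f z = 0}"
    have Zf: "finite Z" unfolding Z_def by (rule finite_subset[OF _ finite_forms]) auto
    define a where "a = (\<lambda>m. \<Sum>f\<in>Z. sgn (LL f x) * coef f m)"
    have da: "dotp n a y = (\<Sum>f\<in>Z. sgn (LL f x) * LL f y)" for y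
    proof -
      have "dotp n a y = (\<Sum>m<n. \<Sum>f\<in>Z. sgn (LL f x) * coef f m * y m)"
        unfolding dotp_def a_def by (simp add: sum_distrib_right)
      also have "\<dots> = (\<Sum>f\<in>Z. \<Sum>m<n. sgn (LL f x) * (coef f m * y m))"
        by (subst sum.swap) (simp add: mult.assoc)
      also have "\<dots> = (\<Sum>f\<in>Z. sgn (LL f x) * dotp n (coef f) y)"
        unfolding dotp_def by (simp add: sum_distrib_left)
      also have "\<dots> = (\<Sum>f\<in>Z. sgn (LL f x) * LL f y)"
        by (rule sum.cong) (auto simp: Z_def dotp_coef)
      finally show ?thesis .
    qed
    have aR: "a \<in> Rn n" unfolding Rn_def
    proof (intro CollectI allI impI)
      fix m assume m: "n \<le> m"
      have "\<forall>f\<in>Z. sgn (LL f x) * coef f m = 0" using coef_zero[OF _ m] unfolding Z_def by auto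
      thus "a m = 0" unfolding a_def by (intro sum.neutral) blast
    qed
    have LLx: "Rr (LL f x) (LL f y)" if fy: "f \<in> forms n" "compat n x y" for f y
    proof -
      obtain b i j where f: "f = (b,i,j)" by (cases f) auto
      have ij: "i < n" "j < n" using fy(1) f unfolding forms_def by auto
      show ?thesis unfolding f LL_def prod.case using fy(2)[unfolded compat_lf, rule_format, OF ij] .
    qed
    have nonneg: "sgn (LL f x) * LL f y \<ge> 0" if "f \<in> forms n" "compat n x y" for f y
      using LLx[OF that] unfolding Rr_def by (auto simp: sgn_if)
    have FCx: "FC n x \<subseteq> {y. dotp n a y \<ge> 0}"
    proof
      fix y assume "y \<in> FC n x"
      hence xy: "compat n x y" unfolding FC_def by auto
      have "(\<Sum>f\<in>Z. sgn (LL f x) * LL f y) \<ge> 0"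
      proof (rule sum_nonneg)
        fix f assume "f \<in> Z"
        hence "f \<in> forms n" unfolding Z_def by auto
        thus "sgn (LL f x) * LL f y \<ge> 0" using nonneg xy by blast
      qed
      thus "y \<in> {y. dotp n a y \<ge> 0}" unfolding da by simp
    qed
    define H where "H = {y \<in> Rn n. dotp n a y = 0}"
    have eq: "FC n x \<inter> H = FC n z"
    proof
      show "FC n z \<subseteq> FC n x \<inter> H"
      proof
        fix y assume y: "y \<in> FC n z"
        have zy: "compat n z y" and yr: "y \<in> Rn n" using y unfolding FC_def by auto
        have "LL f y = 0" if fZ: "f \<in> Z" for f
        proof -
          obtain b i j where f: "f = (b,i,j)" by (cases f) auto
          have ij: "i < n" "j < n" and l0: "lf b i j z = 0" using fZ f unfolding Z_def forms_def LL_def by auto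
          have "Rr (lf b i j z) (lf b i j y)" using zy[unfolded compat_lf, rule_format, OF ij] .
          thus ?thesis unfolding f LL_def prod.case using l0 unfolding Rr_def by blast
        qed
        hence "dotp n a y = 0" unfolding da by simp
        thus "y \<in> FC n x \<inter> H" using compat_trans[OF xz zy] yr unfolding FC_def H_def by auto
      qed
      show "FC n x \<inter> H \<subseteq> FC n z"
      proof
        fix y assume y: "y \<in> FC n x \<inter> H"
        have xy: "compat n x y" and yr: "y \<in> Rn n" and ya: "dotp n a y = 0"
          using y unfolding FC_def H_def by auto
        have "(\<Sum>f\<in>Z. sgn (LL f x) * LL f y) = 0" using ya da by simp
        moreover have "\<forall>f\<in>Z. sgn (LL f x) * LL f y \<ge> 0" using nonneg[OF _ xy] unfolding Z_def by blast
        ultimately have z0: "\<forall>f\<in>Z. sgn (LL f x) * LL f y = 0"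
          using sum_nonneg_eq_0_iff[OF Zf, of "\<lambda>f. sgn (LL f x) * LL f y"] by simp
        have "compat n z y" unfolding compat_lf
        proof (intro allI impI)
          fix b i j assume ij: "i < n" "j < n"
          have f: "(b,i,j) \<in> forms n" using ij unfolding forms_def by auto
          show "Rr (lf b i j z) (lf b i j y)"
          proof (cases "lf b i j z = 0")
            case True
            hence fZ: "(b,i,j) \<in> Z" using f unfolding Z_def LL_def by auto
            have "lf b i j y = 0"
            proof (cases "lf b i j x = 0")
              case True
              have "Rr (lf b i j x) (lf b i j y)" using xy[unfolded compat_lf, rule_format, OF ij] .
              thus ?thesis using True by (simp add: Rr_def)
            next
              case False
              have "sgn (LL (b,i,j) x) * LL (b,i,j) y = 0" using z0 fZ by blast
              hence "sgn (lf b i j x) * lf b i j y = 0" by (simp add: LL_def)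
              moreover have "sgn (lf b i j x) \<noteq> 0" using False by (simp add: sgn_if)
              ultimately show ?thesis by simp
            qed
            thus ?thesis by (simp add: Rr_0)
          next
            case False
            have "Rr (lf b i j x) (lf b i j y)" using xy[unfolded compat_lf, rule_format, OF ij] .
            thus ?thesis using Rr_sgn[OF pres[OF ij False]] by simp
          qed
        qed
        thus "y \<in> FC n z" using yr unfolding FC_def by auto
      qed
    qed
    have "\<exists>f\<in>Z. LL f x \<noteq> 0"
    proof -
      have "\<not> (z \<in> W0 n \<and> (\<forall>i<n. \<forall>j<n. z i + z j \<noteq> 0))" using ng unfolding generic_iff by blast
      hence "(\<exists>i j. i < j \<and> j < n \<and> z i = z j) \<or> (\<exists>i<n. \<exists>j<n. z i + z j = 0)"
      proof (cases "\<exists>i j. i < j \<and> j < n \<and> z i = z j")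
        case False
        have "z \<in> W0 n" unfolding W0_def
        proof (intro CollectI conjI allI impI)
          show "z \<in> Rn n" by (rule zr)
          fix i j assume ij: "i < j \<and> j < n"
          have "z j \<le> z i" using zW ij unfolding Wcl_def by auto
          moreover have "z i \<noteq> z j" using False ij by blast
          ultimately show "z j < z i" by simp
        qed
        thus ?thesis using \<open>\<not> (z \<in> W0 n \<and> (\<forall>i<n. \<forall>j<n. z i + z j \<noteq> 0))\<close> by blast
      qed blast
      thus ?thesis
      proof
        assume "\<exists>i j. i < j \<and> j < n \<and> z i = z j"
        then obtain i j where ij: "i < j" "j < n" "z i = z j" by blast
        hence "(False,i,j) \<in> Z" unfolding Z_def forms_def LL_def lf_def by auto
        moreover have "LL (False,i,j) x \<noteq> 0" using generic_minus[OF gx, of i j] ij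
          unfolding LL_def lf_def by auto
        ultimately show ?thesis by blast
      next
        assume "\<exists>i<n. \<exists>j<n. z i + z j = 0"
        then obtain i j where ij: "i < n" "j < n" "z i + z j = 0" by blast
        hence "(True,i,j) \<in> Z" unfolding Z_def forms_def LL_def lf_def by auto
        moreover have "LL (True,i,j) x \<noteq> 0" using gx ij unfolding generic_iff LL_def lf_def by auto
        ultimately show ?thesis by blast
      qed
    qed
    then obtain f0 where f0: "f0 \<in> Z" "LL f0 x \<noteq> 0" by blast
    have "dotp n a x > 0"
    proof -
      have "sgn (LL f0 x) * LL f0 x > 0" using f0(2) by (auto simp: sgn_if)
      moreover have "\<forall>f\<in>Z. sgn (LL f x) * LL f x \<ge> 0" by (auto simp: sgn_if)
      ultimately have "(\<Sum>f\<in>Z. sgn (LL f x) * LL f x) > 0"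
        by (intro sum_pos2[OF Zf f0(1)]) auto
      thus ?thesis unfolding da .
    qed
    hence an: "a \<noteq> 0" unfolding dotp_def by auto
    have "supporting_hyperplane n (FC n x) H"
      unfolding supporting_hyperplane_def
    proof (intro bexI[of _ a] conjI)
      show "a \<in> Rn n" by (rule aR)
      show "a \<noteq> 0" by (rule an)
      show "H = {x \<in> Rn n. (\<Sum>i<n. a i * x i) = 0}" unfolding H_def dotp_def ..
      show "FC n x \<subseteq> {x. 0 \<le> (\<Sum>i<n. a i * x i)}" using FCx unfolding dotp_def .
      have "z \<in> FC n z" using zr compat_refl unfolding FC_def by auto
      thus "FC n x \<inter> H \<noteq> {}" using eq by auto
    qed
    moreover have "FC n x \<in> chambers n" using gx chambers_eq by blast
    ultimately show ?thesis unfolding faces_def using eq by blast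
  qed
qed

lemma faces_eq: "faces n = FC n ` Wcl n"
proof
  show "faces n \<subseteq> FC n ` Wcl n"
  proof
    fix F assume "F \<in> faces n"
    then consider "F \<in> chambers n" | C H where "C \<in> chambers n" "supporting_hyperplane n C H" "F = C \<inter> H"
      unfolding faces_def by blast
    thus "F \<in> FC n ` Wcl n"
    proof cases
      case 1
      then obtain x where "generic n x" "F = FC n x" using chambers_eq by blast
      thus ?thesis using generic_W0 W0_Wcl by blast
    next
      case (2 C H)
      then obtain x where x: "generic n x" "C = FC n x" using chambers_eq by blast
      then obtain z where "z \<in> Wcl n" "C \<inter> H = FC n z" using face_A 2 by blast
      thus ?thesis using 2 by blast
    qed
  qed
  show "FC n ` Wcl n \<subseteq> faces n" using face_B by blast
qed

lemma phi: fixes a b ra rb :: real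
  assumes "a = 0 \<Longrightarrow> ra = 0" "a \<noteq> 0 \<Longrightarrow> ra > 0" "b = 0 \<Longrightarrow> rb = 0" "b \<noteq> 0 \<Longrightarrow> rb > 0"
   "\<bar>a\<bar> < \<bar>b\<bar> \<Longrightarrow> ra < rb" "\<bar>b\<bar> < \<bar>a\<bar> \<Longrightarrow> rb < ra" "\<bar>a\<bar> = \<bar>b\<bar> \<Longrightarrow> ra = rb"
  shows "sgn (sgn a * ra - sgn b * rb) = sgn (a - b)"
proof -
  have "a > 0 \<or> a = 0 \<or> a < 0" "b > 0 \<or> b = 0 \<or> b < 0" "a < b \<or> a = b \<or> b < a" by linarith+
  thus ?thesis using assms
    apply (elim disjE)
    apply (simp_all add: abs_if)
    done
qed


lemma card_image_cong:
  assumes "finite J" "\<forall>j\<in>J. \<forall>l\<in>J. f j = f l \<longleftrightarrow> h j = h l"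
  shows "card (f ` J) = card (h ` J)"
  using assms
proof (induction J rule: finite_induct)
  case empty thus ?case by simp
next
  case (insert a J)
  have IH: "card (f ` J) = card (h ` J)" using insert by blast
  have P: "\<forall>j\<in>J. f a = f j \<longleftrightarrow> h a = h j" using insert.prems by blast
  have "f a \<in> f ` J \<longleftrightarrow> h a \<in> h ` J"
  proof
    assume "f a \<in> f ` J"
    then obtain j where "j \<in> J" "f a = f j" by blast
    thus "h a \<in> h ` J" using P by auto
  next
    assume "h a \<in> h ` J"
    then obtain j where "j \<in> J" "h a = h j" by blast
    thus "f a \<in> f ` J" using P by auto
  qed
  thus ?case using IH insert.hyps by (auto simp: card_insert_if)
qed

lemma abs_le_sgn: "\<bar>a::real\<bar> \<le> \<bar>b\<bar> \<longleftrightarrow> sgn (a - b) * sgn (a + b) \<le> 0"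
proof -
  have e1: "sgn (a - b) * sgn (a + b) = sgn ((a - b) * (a + b))" by (rule sgn_mult[symmetric])
  have e2: "(a - b) * (a + b) = a\<^sup>2 - b\<^sup>2" by (simp add: power2_eq_square algebra_simps)
  have e3: "sgn (a\<^sup>2 - b\<^sup>2) \<le> 0 \<longleftrightarrow> a\<^sup>2 \<le> b\<^sup>2" by (simp add: sgn_if)
  show ?thesis unfolding e1 e2 e3 by (rule abs_le_square_iff)
qed

lemma abs_eq_sgn: "\<bar>a::real\<bar> = \<bar>b\<bar> \<longleftrightarrow> sgn (a - b) = 0 \<or> sgn (a + b) = 0"
proof -
  have "\<bar>a\<bar> = \<bar>b\<bar> \<longleftrightarrow> a = b \<or> a = - b" by linarith
  also have "\<dots> \<longleftrightarrow> a - b = 0 \<or> a + b = 0" by linarith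
  finally show ?thesis unfolding sgn_0_0 .
qed

lemma nz_sgn: "(a::real) \<noteq> 0 \<longleftrightarrow> sgn (a + a) \<noteq> 0" unfolding sgn_0_0 by linarith
lemma sgn_double: "sgn ((a::real) + a) = sgn a" by (simp add: sgn_if)

definition Jx :: "nat \<Rightarrow> (nat \<Rightarrow> real) \<Rightarrow> nat \<Rightarrow> nat set" where
  "Jx n x i = {j. j < n \<and> x j \<noteq> 0 \<and> \<bar>x j\<bar> \<le> \<bar>x i\<bar>}"

definition rr :: "nat \<Rightarrow> (nat \<Rightarrow> real) \<Rightarrow> nat \<Rightarrow> nat" where
  "rr n x i = card ((\<lambda>j. \<bar>x j\<bar>) ` Jx n x i)"

definition nv :: "nat \<Rightarrow> (nat \<Rightarrow> real) \<Rightarrow> nat \<Rightarrow> real" where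
  "nv n x i = sgn (x i) * real (rr n x i)"

lemma finite_Jx: "finite (Jx n x i)" unfolding Jx_def by auto

lemma same_Jx: assumes "same n x y" "i < n" shows "Jx n x i = Jx n y i"
proof -
  have "x j \<noteq> 0 \<and> \<bar>x j\<bar> \<le> \<bar>x i\<bar> \<longleftrightarrow> y j \<noteq> 0 \<and> \<bar>y j\<bar> \<le> \<bar>y i\<bar>" if "j < n" for j
  proof -
    have s: "\<forall>i<n. \<forall>j<n. sgn (x i + x j) = sgn (y i + y j) \<and> sgn (x i - x j) = sgn (y i - y j)"
      using assms(1) unfolding same_def .
    have "sgn (x j + x j) = sgn (y j + y j)" "sgn (x j - x i) = sgn (y j - y i)" "sgn (x j + x i) = sgn (y j + y i)"
      using s[rule_format, OF that that] s[rule_format, OF that assms(2)] by blast+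
    hence "x j \<noteq> 0 \<longleftrightarrow> y j \<noteq> 0" using nz_sgn[of "x j"] nz_sgn[of "y j"] by simp
    moreover have "\<bar>x j\<bar> \<le> \<bar>x i\<bar> \<longleftrightarrow> \<bar>y j\<bar> \<le> \<bar>y i\<bar>"
      using abs_le_sgn[of "x j" "x i"] abs_le_sgn[of "y j" "y i"] \<open>sgn (x j - x i) = sgn (y j - y i)\<close>
        \<open>sgn (x j + x i) = sgn (y j + y i)\<close> by simp
    ultimately show ?thesis by blast
  qed
  thus ?thesis unfolding Jx_def by auto
qed

lemma same_rr: assumes "same n x y" "i < n" shows "rr n x i = rr n y i"
proof -
  have J: "Jx n x i = Jx n y i" using same_Jx[OF assms] .
  have "\<forall>j\<in>Jx n x i. \<forall>l\<in>Jx n x i. \<bar>x j\<bar> = \<bar>x l\<bar> \<longleftrightarrow> \<bar>y j\<bar> = \<bar>y l\<bar>"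
  proof (intro ballI)
    fix j l assume "j \<in> Jx n x i" "l \<in> Jx n x i"
    hence "j < n" "l < n" unfolding Jx_def by auto
    hence "sgn (x j - x l) = sgn (y j - y l)" "sgn (x j + x l) = sgn (y j + y l)"
      using assms unfolding same_def by auto
    thus "\<bar>x j\<bar> = \<bar>x l\<bar> \<longleftrightarrow> \<bar>y j\<bar> = \<bar>y l\<bar>" unfolding abs_eq_sgn by simp
  qed
  hence "card ((\<lambda>j. \<bar>x j\<bar>) ` Jx n x i) = card ((\<lambda>j. \<bar>y j\<bar>) ` Jx n x i)"
    by (rule card_image_cong[OF finite_Jx])
  thus ?thesis unfolding rr_def J .
qed

lemma same_nv: assumes "same n x y" "i < n" shows "nv n x i = nv n y i"
proof -
  have s: "\<forall>i<n. \<forall>j<n. sgn (x i + x j) = sgn (y i + y j) \<and> sgn (x i - x j) = sgn (y i - y j)"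
      using assms(1) unfolding same_def .
  have "sgn (x i + x i) = sgn (y i + y i)" using s[rule_format, OF assms(2) assms(2)] by blast
  thus ?thesis unfolding nv_def same_rr[OF assms] sgn_double by simp
qed

definition vec :: "int list \<Rightarrow> nat \<Rightarrow> real" where
  "vec xs i = (if i < length xs then real_of_int (xs ! i) else 0)"

definition Lset :: "nat \<Rightarrow> nat \<Rightarrow> int list set" where
  "Lset n k = {xs. length xs = n \<and> sorted_wrt (\<ge>) xs \<and> (\<forall>x\<in>set xs. \<bar>x\<bar> \<le> int k)
                  \<and> (\<forall>v\<in>{1..int k}. v \<in> abs ` set xs)}"

lemma vec_Rn: "length xs = n \<Longrightarrow> vec xs \<in> Rn n" unfolding vec_def Rn_def by auto

lemma nv_vec: assumes L: "xs \<in> Lset n k" and i: "i < n" shows "nv n (vec xs) i = real_of_int (xs ! i)"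
proof -
  have len: "length xs = n" using L unfolding Lset_def by auto
  have vj: "vec xs j = real_of_int (xs ! j)" if "j < n" for j using that len unfolding vec_def by auto
  have img: "(\<lambda>j. \<bar>vec xs j\<bar>) ` Jx n (vec xs) i = real_of_int ` {1..\<bar>xs ! i\<bar>}"
  proof
    show "(\<lambda>j. \<bar>vec xs j\<bar>) ` Jx n (vec xs) i \<subseteq> real_of_int ` {1..\<bar>xs ! i\<bar>}"
    proof
      fix v assume "v \<in> (\<lambda>j. \<bar>vec xs j\<bar>) ` Jx n (vec xs) i"
      then obtain j where j: "j < n" "vec xs j \<noteq> 0" "\<bar>vec xs j\<bar> \<le> \<bar>vec xs i\<bar>" "v = \<bar>vec xs j\<bar>"
        unfolding Jx_def by auto
      hence "xs ! j \<noteq> 0" "\<bar>xs ! j\<bar> \<le> \<bar>xs ! i\<bar>" "v = real_of_int \<bar>xs ! j\<bar>" using vj[OF j(1)] vj[OF i] by auto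
      thus "v \<in> real_of_int ` {1..\<bar>xs ! i\<bar>}" by (auto intro!: image_eqI[where x="\<bar>xs ! j\<bar>"])
    qed
    show "real_of_int ` {1..\<bar>xs ! i\<bar>} \<subseteq> (\<lambda>j. \<bar>vec xs j\<bar>) ` Jx n (vec xs) i"
    proof
      fix v assume "v \<in> real_of_int ` {1..\<bar>xs ! i\<bar>}"
      then obtain u where u: "u \<in> {1..\<bar>xs ! i\<bar>}" "v = real_of_int u" by auto
      have "xs ! i \<in> set xs" using i len by auto
      hence "\<bar>xs ! i\<bar> \<le> int k" using L unfolding Lset_def by auto
      hence "u \<in> {1..int k}" using u by auto
      hence "u \<in> abs ` set xs" using L unfolding Lset_def by auto
      then obtain j where j: "j < n" "u = \<bar>xs ! j\<bar>" using len by (auto simp: in_set_conv_nth)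
      have "j \<in> Jx n (vec xs) i" unfolding Jx_def using j u vj[OF j(1)] vj[OF i] by auto
      moreover have "v = \<bar>vec xs j\<bar>" using j u vj[OF j(1)] by simp
      ultimately show "v \<in> (\<lambda>j. \<bar>vec xs j\<bar>) ` Jx n (vec xs) i" by blast
    qed
  qed
  have "rr n (vec xs) i = nat \<bar>xs ! i\<bar>"
    unfolding rr_def img by (subst card_image) (auto simp: inj_on_def)
  thus ?thesis unfolding nv_def vj[OF i] by (auto simp: sgn_if)
qed

lemma L_inj: assumes "xs \<in> Lset n k" "ys \<in> Lset n k'" "same n (vec xs) (vec ys)" shows "xs = ys"
proof (rule nth_equalityI)
  show "length xs = length ys" using assms unfolding Lset_def by auto
  fix i assume "i < length xs"
  hence i: "i < n" using assms unfolding Lset_def by auto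
  have "real_of_int (xs ! i) = real_of_int (ys ! i)"
    using nv_vec[OF assms(1) i] nv_vec[OF assms(2) i] same_nv[OF assms(3) i] by simp
  thus "xs ! i = ys ! i" by simp
qed

definition sgi :: "real \<Rightarrow> int" where "sgi t = (if t > 0 then 1 else if t < 0 then -1 else 0)"

lemma sgi_real: "real_of_int (sgi t * int r) = sgn t * real r" by (simp add: sgi_def sgn_if)
lemma sgi_real2: "real_of_int (sgi t) = sgn t" by (simp add: sgi_def sgn_if)

definition nl :: "nat \<Rightarrow> (nat \<Rightarrow> real) \<Rightarrow> int list" where
  "nl n x = map (\<lambda>i. sgi (x i) * int (rr n x i)) [0..<n]"

definition AA :: "nat \<Rightarrow> (nat \<Rightarrow> real) \<Rightarrow> real set" where
  "AA n x = (\<lambda>j. \<bar>x j\<bar>) ` {j. j < n \<and> x j \<noteq> 0}"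

lemma finite_AA: "finite (AA n x)" unfolding AA_def by auto

lemma rr_AA: "rr n x i = card {a \<in> AA n x. a \<le> \<bar>x i\<bar>}"
proof -
  have "(\<lambda>j. \<bar>x j\<bar>) ` Jx n x i = {a \<in> AA n x. a \<le> \<bar>x i\<bar>}" unfolding Jx_def AA_def by auto
  thus ?thesis unfolding rr_def by simp
qed

lemma rr_0: "x i = 0 \<Longrightarrow> rr n x i = 0"
proof -
  assume "x i = 0"
  hence "Jx n x i = {}" unfolding Jx_def by auto
  thus ?thesis unfolding rr_def by simp
qed

lemma rr_pos: "i < n \<Longrightarrow> x i \<noteq> 0 \<Longrightarrow> rr n x i > 0"
proof -
  assume "i < n" "x i \<noteq> 0"
  hence "i \<in> Jx n x i" unfolding Jx_def by auto
  hence "(\<lambda>j. \<bar>x j\<bar>) ` Jx n x i \<noteq> {}" by blast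
  thus ?thesis unfolding rr_def using finite_Jx by (simp add: card_gt_0_iff)
qed

lemma rr_eq: "\<bar>x i\<bar> = \<bar>x j\<bar> \<Longrightarrow> rr n x i = rr n x j" unfolding rr_AA by simp

lemma rr_less: assumes "j < n" "\<bar>x i\<bar> < \<bar>x j\<bar>" shows "rr n x i < rr n x j"
proof -
  have "{a \<in> AA n x. a \<le> \<bar>x i\<bar>} \<subset> {a \<in> AA n x. a \<le> \<bar>x j\<bar>}"
  proof
    show "{a \<in> AA n x. a \<le> \<bar>x i\<bar>} \<subseteq> {a \<in> AA n x. a \<le> \<bar>x j\<bar>}" using assms by auto
    have "x j \<noteq> 0" using assms by auto
    hence "\<bar>x j\<bar> \<in> AA n x" using assms unfolding AA_def by auto
    hence "\<bar>x j\<bar> \<in> {a \<in> AA n x. a \<le> \<bar>x j\<bar>}" by simp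
    moreover have "\<bar>x j\<bar> \<notin> {a \<in> AA n x. a \<le> \<bar>x i\<bar>}" using assms by simp
    ultimately show "{a \<in> AA n x. a \<le> \<bar>x i\<bar>} \<noteq> {a \<in> AA n x. a \<le> \<bar>x j\<bar>}" by blast
  qed
  moreover have "finite {a \<in> AA n x. a \<le> \<bar>x j\<bar>}" using finite_AA by simp
  ultimately show ?thesis unfolding rr_AA using psubset_card_mono by blast
qed

lemma nl_len: "length (nl n x) = n" unfolding nl_def by simp

lemma vec_nl: "i < n \<Longrightarrow> vec (nl n x) i = nv n x i"
  unfolding vec_def nl_def nv_def by (simp add: sgi_real2)

lemma phi_ij: assumes "i < n" "j < n"
  shows "sgn (nv n x i - nv n x j) = sgn (x i - x j)" "sgn (nv n x i + nv n x j) = sgn (x i + x j)"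
proof -
  have c1: "x i = 0 \<Longrightarrow> real (rr n x i) = 0" "x j = 0 \<Longrightarrow> real (rr n x j) = 0" using rr_0 by auto
  have c2: "x i \<noteq> 0 \<Longrightarrow> real (rr n x i) > 0" "x j \<noteq> 0 \<Longrightarrow> real (rr n x j) > 0" using rr_pos assms by auto
  have c3: "\<bar>x i\<bar> < \<bar>x j\<bar> \<Longrightarrow> real (rr n x i) < real (rr n x j)" "\<bar>x j\<bar> < \<bar>x i\<bar> \<Longrightarrow> real (rr n x j) < real (rr n x i)"
    using rr_less assms by auto
  have c4: "\<bar>x i\<bar> = \<bar>x j\<bar> \<Longrightarrow> real (rr n x i) = real (rr n x j)" using rr_eq by metis
  show "sgn (nv n x i - nv n x j) = sgn (x i - x j)" unfolding nv_def
    by (rule phi) (use c1 c2 c3 c4 in auto)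
  have "sgn (sgn (x i) * real (rr n x i) - sgn (- x j) * real (rr n x j)) = sgn (x i - - x j)"
    by (rule phi) (use c1 c2 c3 c4 in auto)
  thus "sgn (nv n x i + nv n x j) = sgn (x i + x j)" unfolding nv_def by (simp add: sgn_minus)
qed

lemma same_nl: "same n x (vec (nl n x))"
  unfolding same_def using phi_ij vec_nl by simp

lemma nl_L: assumes xW: "x \<in> Wcl n" shows "nl n x \<in> Lset n (card (AA n x))"
proof -
  let ?k = "card (AA n x)"
  have nth: "nl n x ! i = sgi (x i) * int (rr n x i)" if "i < n" for i using that unfolding nl_def by simp
  have sorted: "sorted_wrt (\<ge>) (nl n x)" unfolding sorted_wrt_iff_nth_less nl_len
  proof (intro allI impI)
    fix i j assume ij: "i < j" "j < n"
    have "x j \<le> x i" using xW ij unfolding Wcl_def by auto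
    hence "sgn (nv n x i - nv n x j) \<ge> 0" using phi_ij(1)[of i n j x] ij by (simp add: sgn_if)
    hence "nv n x j \<le> nv n x i" by (simp add: sgn_if split: if_splits)
    hence "real_of_int (nl n x ! j) \<le> real_of_int (nl n x ! i)"
      using vec_nl[of i n x] vec_nl[of j n x] ij unfolding vec_def nl_len by simp
    thus "nl n x ! j \<le> nl n x ! i" by linarith
  qed
  have absnl: "\<bar>nl n x ! i\<bar> = int (rr n x i)" if "i < n" for i
  proof (cases "x i = 0")
    case True thus ?thesis using nth[OF that] rr_0 by simp
  next
    case False thus ?thesis using nth[OF that] by (auto simp: sgi_def abs_mult)
  qed
  have bound: "\<forall>y\<in>set (nl n x). \<bar>y\<bar> \<le> int ?k"
  proof
    fix y assume "y \<in> set (nl n x)"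
    then obtain i where i: "i < n" "y = nl n x ! i" by (auto simp: in_set_conv_nth nl_len)
    have "rr n x i \<le> ?k" unfolding rr_AA by (rule card_mono[OF finite_AA]) auto
    thus "\<bar>y\<bar> \<le> int ?k" using absnl[OF i(1)] i by simp
  qed
  define rho where "rho = (\<lambda>a. card {a' \<in> AA n x. a' \<le> a})"
  have rho_rr: "rho \<bar>x i\<bar> = rr n x i" for i unfolding rho_def rr_AA ..
  have inj: "inj_on rho (AA n x)"
  proof (rule inj_onI)
    fix a b assume ab: "a \<in> AA n x" "b \<in> AA n x" "rho a = rho b"
    obtain i where i: "i < n" "a = \<bar>x i\<bar>" using ab(1) unfolding AA_def by auto
    obtain j where j: "j < n" "b = \<bar>x j\<bar>" using ab(2) unfolding AA_def by auto
    show "a = b"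
    proof (rule ccontr)
      assume "a \<noteq> b"
      hence "\<bar>x i\<bar> < \<bar>x j\<bar> \<or> \<bar>x j\<bar> < \<bar>x i\<bar>" using i j by linarith
      hence "rr n x i \<noteq> rr n x j" using rr_less[of j n x i] rr_less[of i n x j] i j by fastforce
      thus False using ab(3) i j rho_rr by metis
    qed
  qed
  have rho_range: "rho ` AA n x \<subseteq> {1..?k}"
  proof
    fix v assume "v \<in> rho ` AA n x"
    then obtain a where a: "a \<in> AA n x" "v = rho a" by blast
    have "a \<in> {a' \<in> AA n x. a' \<le> a}" using a by auto
    hence "rho a \<ge> 1" unfolding rho_def using finite_AA
      by (metis (no_types, lifting) One_nat_def Suc_leI card_gt_0_iff empty_iff finite_subset mem_Collect_eq subsetI)
    moreover have "rho a \<le> ?k" unfolding rho_def by (rule card_mono[OF finite_AA]) auto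
    ultimately show "v \<in> {1..?k}" using a by simp
  qed
  have "card (rho ` AA n x) = card {1..?k}" using card_image[OF inj] by simp
  hence rho_eq: "rho ` AA n x = {1..?k}" using card_subset_eq[OF finite_atLeastAtMost rho_range] by simp
  have cover: "\<forall>v\<in>{1..int ?k}. v \<in> abs ` set (nl n x)"
  proof
    fix v assume v: "v \<in> {1..int ?k}"
    hence "nat v \<in> {1..?k}" by auto
    then obtain a where a: "a \<in> AA n x" "rho a = nat v" using rho_eq by (metis imageE)
    obtain i where i: "i < n" "a = \<bar>x i\<bar>" using a(1) unfolding AA_def by auto
    have "\<bar>nl n x ! i\<bar> = v" using absnl[OF i(1)] rho_rr[of i] a i v by simp
    moreover have "nl n x ! i \<in> set (nl n x)" using i nl_len by simp
    ultimately show "v \<in> abs ` set (nl n x)" by blast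
  qed
  show ?thesis unfolding Lset_def using nl_len sorted bound cover by blast
qed

lemma VS: "vector_space (\<lambda>(c::real) (f::nat\<Rightarrow>real) i. c * f i)"
  by unfold_locales (auto simp: fun_eq_iff algebra_simps)

lemma sum_fun_apply: "finite S \<Longrightarrow> (\<Sum>v\<in>S. (f v :: nat \<Rightarrow> real)) i = (\<Sum>v\<in>S. f v i)"
  by (induction S rule: finite_induct) auto

lemma tele: "(\<Sum>v\<in>{1..m::nat}. t v - t (v - 1)) = t m - (t 0 :: real)"
proof (induction m)
  case 0 thus ?case by simp
next
  case (Suc m)
  have "{1..Suc m} = insert (Suc m) {1..m}" by auto
  hence "(\<Sum>v\<in>{1..Suc m}. t v - t (v - 1)) = (t (Suc m) - t m) + (\<Sum>v\<in>{1..m}. t v - t (v - 1))"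
    by simp
  thus ?case using Suc by simp
qed

definition psi :: "nat \<Rightarrow> int \<Rightarrow> int" where "psi v t = (if int v \<le> \<bar>t\<bar> then sgn t else 0)"

lemma psi_mono: "a \<le> b \<Longrightarrow> psi v a \<le> psi v b"
  unfolding psi_def by (auto simp: sgn_if)

lemma psi_odd: "psi v (- b) = - psi v b"
  unfolding psi_def by (auto simp: sgn_if)

lemma Rr_psi_minus: "Rr (real_of_int (a - b)) (real_of_int (psi v a - psi v b))"
proof -
  consider "a < b" | "a = b" | "b < a" by linarith
  thus ?thesis
  proof cases
    case 1 thus ?thesis using psi_mono[of a b v] unfolding Rr_def by simp
  next
    case 2 thus ?thesis unfolding Rr_def by simp
  next
    case 3 thus ?thesis using psi_mono[of b a v] unfolding Rr_def by simp
  qed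
qed

lemma Rr_psi_plus: "Rr (real_of_int (a + b)) (real_of_int (psi v a + psi v b))"
  using Rr_psi_minus[of a "- b" v] psi_odd[of v b] by simp

definition gg :: "nat \<Rightarrow> int list \<Rightarrow> nat \<Rightarrow> nat \<Rightarrow> real" where
  "gg n xs v = (\<lambda>i. if i < n then real_of_int (psi v (xs ! i)) else 0)"

lemma gg_FC: assumes "length xs = n" shows "gg n xs v \<in> FC n (vec xs)"
proof -
  have "compat n (vec xs) (gg n xs v)" unfolding compat_def
  proof (intro allI impI conjI)
    fix i j assume ij: "i < n" "j < n"
    show "Rr (vec xs i + vec xs j) (gg n xs v i + gg n xs v j)"
      using Rr_psi_plus[of "xs ! i" "xs ! j" v] ij assms unfolding vec_def gg_def by simp
    show "Rr (vec xs i - vec xs j) (gg n xs v i - gg n xs v j)"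
      using Rr_psi_minus[of "xs ! i" "xs ! j" v] ij assms unfolding vec_def gg_def by simp
  qed
  moreover have "gg n xs v \<in> Rn n" unfolding gg_def Rn_def by simp
  ultimately show ?thesis unfolding FC_def by simp
qed

lemma L_witness: assumes "xs \<in> Lset n k" "u \<in> {1..k}" shows "\<exists>j<n. \<bar>xs ! j\<bar> = int u"
proof -
  have "int u \<in> {1..int k}" using assms(2) by auto
  hence "int u \<in> abs ` set xs" using assms(1) unfolding Lset_def by blast
  then obtain z where "z \<in> set xs" "int u = \<bar>z\<bar>" by blast
  thus ?thesis using assms(1) unfolding Lset_def by (auto simp: in_set_conv_nth)
qed

lemma L_bound: assumes "xs \<in> Lset n k" "i < n" shows "\<bar>xs ! i\<bar> \<le> int k"
  using assms unfolding Lset_def by auto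


lemma sum_if_le: assumes "m \<le> k"
  shows "(\<Sum>v\<in>{1..k::nat}. if v \<le> m then f v else (0::real)) = (\<Sum>v\<in>{1..m}. f v)"
proof -
  have "(\<Sum>v\<in>{1..k::nat}. if v \<le> m then f v else (0::real)) = sum f {v \<in> {1..k}. v \<le> m}"
    by (rule sum.inter_filter[symmetric]) simp
  also have "{v \<in> {1..k}. v \<le> m} = {1..m}" using assms by auto
  finally show ?thesis .
qed

lemma dim_FC: assumes L: "xs \<in> Lset n k" shows "span_dim (FC n (vec xs)) = k"
proof -
  interpret V: vector_space "\<lambda>(c::real) (f::nat\<Rightarrow>real) i. c * f i" by (rule VS)
  have len: "length xs = n" using L unfolding Lset_def by auto
  have "\<forall>u\<in>{1..k}. \<exists>j. j < n \<and> \<bar>xs ! j\<bar> = int u" using L_witness[OF L] by blast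
  then obtain jj where jj: "\<And>u. u \<in> {1..k} \<Longrightarrow> jj u < n \<and> \<bar>xs ! jj u\<bar> = int u"
    using bchoice[of "{1..k}" "\<lambda>u j. j < n \<and> \<bar>xs ! j\<bar> = int u"] by blast
  let ?g = "gg n xs"
  have gval: "?g v i = (if i < n \<and> v \<le> nat \<bar>xs ! i\<bar> then real_of_int (sgn (xs ! i)) else 0)" for v i
    unfolding gg_def psi_def by auto
  have sgnnz: "real_of_int (sgn (xs ! jj u)) \<noteq> 0" if "u \<in> {1..k}" for u
    using jj[OF that] that by (auto simp: sgn_if)
  have gjj: "?g v (jj m) = (if v \<le> m then real_of_int (sgn (xs ! jj m)) else 0)" if "m \<in> {1..k}" for v m
    using jj[OF that] gval[of v "jj m"] by auto
  have inj: "inj_on ?g {1..k}"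
  proof (rule inj_onI)
    fix v w assume vw: "v \<in> {1..k}" "w \<in> {1..k}" "?g v = ?g w"
    show "v = w"
    proof (rule ccontr)
      assume "v \<noteq> w"
      hence "v < w \<or> w < v" by linarith
      thus False
      proof
        assume "v < w"
        have "?g v (jj v) \<noteq> 0" using gjj[OF vw(1), of v] sgnnz[OF vw(1)] by simp
        moreover have "?g w (jj v) = 0" using gjj[OF vw(1), of w] \<open>v < w\<close> by simp
        ultimately show False using vw(3) by simp
      next
        assume "w < v"
        have "?g w (jj w) \<noteq> 0" using gjj[OF vw(2), of w] sgnnz[OF vw(2)] by simp
        moreover have "?g v (jj w) = 0" using gjj[OF vw(2), of v] \<open>w < v\<close> by simp
        ultimately show False using vw(3) by simp
      qed
    qed
  qed
  define B where "B = ?g ` {1..k}"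
  have cardB: "card B = k" unfolding B_def using card_image[OF inj] by simp
  have finB: "finite B" unfolding B_def by simp
  have BF: "B \<subseteq> FC n (vec xs)" unfolding B_def using gg_FC[OF len] by blast
  have indep: "\<not> V.dependent B"
  proof
    assume "V.dependent B"
    then obtain u where u: "\<exists>w\<in>B. u w \<noteq> 0" "(\<Sum>w\<in>B. (\<lambda>i. u w * w i)) = 0"
      using V.dependent_finite[OF finB] by blast
    have s0: "(\<Sum>v\<in>{1..k}. (\<lambda>i. u (?g v) * ?g v i)) = 0"
    proof -
      have "(\<Sum>w\<in>?g ` {1..k}. (\<lambda>i. u w * w i)) = (\<Sum>v\<in>{1..k}. (\<lambda>i. u (?g v) * ?g v i))"
        by (subst sum.reindex[OF inj]) (simp add: o_def)
      thus ?thesis using u(2) unfolding B_def by simp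
    qed
    define P where "P = (\<lambda>m. \<Sum>v\<in>{1..m}. u (?g v))"
    have P0: "P m = 0" if m: "m \<in> {1..k}" for m
    proof -
      have "(\<Sum>v\<in>{1..k}. (\<lambda>i. u (?g v) * ?g v i)) (jj m) = 0" using s0 by simp
      hence "(\<Sum>v\<in>{1..k}. u (?g v) * ?g v (jj m)) = 0" by (simp add: sum_fun_apply)
      hence "(\<Sum>v\<in>{1..k}. if v \<le> m then u (?g v) * real_of_int (sgn (xs ! jj m)) else 0) = 0"
        using gjj[OF m] by (simp add: if_distrib cong: if_cong)
      hence "(\<Sum>v\<in>{1..m}. u (?g v) * real_of_int (sgn (xs ! jj m))) = 0"
        using sum_if_le[of m k] m by simp
      hence "P m * real_of_int (sgn (xs ! jj m)) = 0" unfolding P_def by (simp add: sum_distrib_right)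
      thus ?thesis using sgnnz[OF m] by simp
    qed
    have "u w = 0" if w: "w \<in> B" for w
    proof -
      obtain m where m: "m \<in> {1..k}" "w = ?g m" using w unfolding B_def by blast
      obtain m' where m': "m = Suc m'" using m by (cases m) auto
      have "P m = P m' + u (?g m)" unfolding P_def m' by (simp add: sum.cl_ivl_Suc)
      moreover have "P m' = 0"
      proof (cases "m' = 0")
        case True thus ?thesis unfolding P_def by simp
      next
        case False thus ?thesis using P0[of m'] m m' by simp
      qed
      ultimately show ?thesis using P0[OF m(1)] m(2) by simp
    qed
    thus False using u(1) by blast
  qed
  have span: "FC n (vec xs) \<subseteq> V.span B"
  proof
    fix y assume y: "y \<in> FC n (vec xs)"
    have cp: "compat n (vec xs) y" and yr: "y \<in> Rn n" using y unfolding FC_def by auto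
    have Rp: "Rr (real_of_int (xs ! i + xs ! j)) (y i + y j)" if "i < n" "j < n" for i j
      using cp that len unfolding compat_def vec_def by auto
    have Rm: "Rr (real_of_int (xs ! i - xs ! j)) (y i - y j)" if "i < n" "j < n" for i j
      using cp that len unfolding compat_def vec_def by auto
    have b1: "y i = 0" if "i < n" "xs ! i = 0" for i using Rp[OF that(1) that(1)] that(2) unfolding Rr_def by simp
    have b2: "y i = y j" if "i < n" "j < n" "xs ! i = xs ! j" for i j using Rm[OF that(1,2)] that(3) unfolding Rr_def by simp
    have b3: "y i = - y j" if "i < n" "j < n" "xs ! i = - xs ! j" for i j using Rp[OF that(1,2)] that(3) unfolding Rr_def by simp
    define t where "t = (\<lambda>u. if u = 0 then 0 else real_of_int (sgn (xs ! jj u)) * y (jj u))"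
    have b4: "y i = real_of_int (sgn (xs ! i)) * t (nat \<bar>xs ! i\<bar>)" if i: "i < n" for i
    proof (cases "xs ! i = 0")
      case True thus ?thesis using b1[OF i] by simp
    next
      case False
      define u where "u = nat \<bar>xs ! i\<bar>"
      have u: "u \<in> {1..k}" using False L_bound[OF L i] unfolding u_def by auto
      have ju: "jj u < n" "\<bar>xs ! jj u\<bar> = \<bar>xs ! i\<bar>" using jj[OF u] unfolding u_def by auto
      have tu: "t u = real_of_int (sgn (xs ! jj u)) * y (jj u)" using u unfolding t_def by simp
      have "xs ! jj u = xs ! i \<or> xs ! jj u = - xs ! i" using ju(2) by linarith
      thus ?thesis
      proof
        assume e: "xs ! jj u = xs ! i"
        hence "y (jj u) = y i" using b2[OF ju(1) i] by simp
        thus ?thesis using tu e False unfolding u_def by (simp add: sgn_if)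
      next
        assume e: "xs ! jj u = - xs ! i"
        hence "y (jj u) = - y i" using b3[OF ju(1) i] by simp
        thus ?thesis using tu e False unfolding u_def by (simp add: sgn_if)
      qed
    qed
    define c where "c = (\<lambda>v. t v - t (v - 1))"
    have yeq: "y = (\<Sum>v\<in>{1..k}. (\<lambda>i. c v * ?g v i))"
    proof
      fix i
      show "y i = (\<Sum>v\<in>{1..k}. (\<lambda>i. c v * ?g v i)) i"
      proof (cases "i < n")
        case False
        hence "y i = 0" using yr unfolding Rn_def by auto
        thus ?thesis using False by (simp add: sum_fun_apply gval)
      next
        case True
        define m where "m = nat \<bar>xs ! i\<bar>"
        have mk: "m \<le> k" using L_bound[OF L True] unfolding m_def by auto
        have "(\<Sum>v\<in>{1..k}. (\<lambda>i. c v * ?g v i)) i = (\<Sum>v\<in>{1..k}. c v * ?g v i)" by (simp add: sum_fun_apply)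
        also have "\<dots> = (\<Sum>v\<in>{1..k}. if v \<le> m then c v * real_of_int (sgn (xs ! i)) else 0)"
          using True unfolding gval m_def by (intro sum.cong) auto
        also have "\<dots> = (\<Sum>v\<in>{1..m}. c v * real_of_int (sgn (xs ! i)))" using sum_if_le[OF mk] by simp
        also have "\<dots> = (t m - t 0) * real_of_int (sgn (xs ! i))"
          unfolding c_def using tele[of t m] by (simp add: sum_distrib_right[symmetric])
        also have "\<dots> = y i" using b4[OF True] unfolding m_def t_def by simp
        finally show ?thesis by simp
      qed
    qed
    have "(\<Sum>v\<in>{1..k}. (\<lambda>i. c v * ?g v i)) \<in> V.span B"
    proof (rule V.span_sum)
      fix v assume "v \<in> {1..k}"
      hence "?g v \<in> V.span B" unfolding B_def by (intro V.span_base) blast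
      thus "(\<lambda>i. c v * ?g v i) \<in> V.span B" by (rule V.span_scale)
    qed
    thus "y \<in> V.span B" using yeq by simp
  qed
  have "V.dim (FC n (vec xs)) = k" by (rule V.dim_unique[OF BF span indep cardB])
  thus ?thesis unfolding span_dim_def .
qed

definition Mset :: "nat \<Rightarrow> nat \<Rightarrow> int list set" where
  "Mset n k = {xs. length xs = n \<and> sorted_wrt (\<ge>) xs \<and> (\<forall>x\<in>set xs. \<bar>x\<bar> \<le> int k)
                  \<and> (\<forall>v\<in>{1..int k - 1}. v \<in> abs ` set xs)}"

definition Nset :: "nat \<Rightarrow> nat \<Rightarrow> int list set" where
  "Nset n k = {xs \<in> Mset n k. int k \<notin> set xs}"

lemma finite_lists_bounded: "finite {xs :: int list. length xs = n \<and> (\<forall>x\<in>set xs. \<bar>x\<bar> \<le> int k)}"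
proof -
  have "{xs :: int list. length xs = n \<and> (\<forall>x\<in>set xs. \<bar>x\<bar> \<le> int k)} \<subseteq> {xs. set xs \<subseteq> {- int k..int k} \<and> length xs = n}"
    by (auto simp: abs_le_iff)
  thus ?thesis using finite_lists_length_eq[of "{- int k..int k}" n] finite_subset by blast
qed

lemma finite_M: "finite (Mset n k)"
  by (rule finite_subset[OF _ finite_lists_bounded[of n k]]) (auto simp: Mset_def)
lemma finite_L: "finite (Lset n k)"
  by (rule finite_subset[OF _ finite_lists_bounded[of n k]]) (auto simp: Lset_def)
lemma finite_N: "finite (Nset n k)"
  by (rule finite_subset[OF _ finite_M[of n k]]) (auto simp: Nset_def)

lemma M_split: assumes k: "k \<ge> 1"
  shows "Mset n k = Lset n k \<union> Lset n (k - 1)" "Lset n k \<inter> Lset n (k - 1) = {}"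
proof -
  have ik: "int (k - 1) = int k - 1" using k by simp
  show "Mset n k = Lset n k \<union> Lset n (k - 1)"
  proof
    show "Mset n k \<subseteq> Lset n k \<union> Lset n (k - 1)"
    proof
      fix xs assume xs: "xs \<in> Mset n k"
      show "xs \<in> Lset n k \<union> Lset n (k - 1)"
      proof (cases "int k \<in> abs ` set xs")
        case True
        have "\<forall>v\<in>{1..int k}. v \<in> abs ` set xs"
        proof
          fix v assume v: "v \<in> {1..int k}"
          show "v \<in> abs ` set xs"
          proof (cases "v = int k")
            case True thus ?thesis using \<open>int k \<in> abs ` set xs\<close> by simp
          next
            case False thus ?thesis using v xs unfolding Mset_def by auto
          qed
        qed
        thus ?thesis using xs unfolding Mset_def Lset_def by auto
      next
        case False
        have "\<forall>x\<in>set xs. \<bar>x\<bar> \<le> int (k - 1)"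
        proof
          fix x assume x: "x \<in> set xs"
          have "\<bar>x\<bar> \<le> int k" using x xs unfolding Mset_def by auto
          moreover have "\<bar>x\<bar> \<noteq> int k" using False x by force
          ultimately show "\<bar>x\<bar> \<le> int (k - 1)" using ik by linarith
        qed
        thus ?thesis using xs ik unfolding Mset_def Lset_def by auto
      qed
    qed
    show "Lset n k \<union> Lset n (k - 1) \<subseteq> Mset n k"
    proof
      fix xs assume "xs \<in> Lset n k \<union> Lset n (k - 1)"
      thus "xs \<in> Mset n k" unfolding Mset_def Lset_def using ik by (auto simp del: of_nat_diff)
    qed
  qed
  show "Lset n k \<inter> Lset n (k - 1) = {}"
  proof (rule ccontr)
    assume "Lset n k \<inter> Lset n (k - 1) \<noteq> {}"
    then obtain xs where a: "xs \<in> Lset n k" "xs \<in> Lset n (k - 1)" by blast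
    have "int k \<in> {1..int k}" using k by simp
    hence "int k \<in> abs ` set xs" using a(1) unfolding Lset_def by blast
    then obtain x where "x \<in> set xs" "\<bar>x\<bar> = int k" by auto
    moreover have "\<forall>x\<in>set xs. \<bar>x\<bar> \<le> int (k - 1)" using a(2) unfolding Lset_def by blast
    ultimately show False using ik by force
  qed
qed


lemma M_cons: assumes k: "k \<ge> 1"
  shows "Mset (Suc n) k = Cons (int k) ` Mset n k \<union> Nset (Suc n) k"
    "Cons (int k) ` Mset n k \<inter> Nset (Suc n) k = {}"
proof -
  show "Mset (Suc n) k = Cons (int k) ` Mset n k \<union> Nset (Suc n) k"
  proof
    show "Mset (Suc n) k \<subseteq> Cons (int k) ` Mset n k \<union> Nset (Suc n) k"
    proof
      fix xs assume xs: "xs \<in> Mset (Suc n) k"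
      then obtain a ys where e: "xs = a # ys" unfolding Mset_def by (cases xs) auto
      have len: "length ys = n" and srt: "sorted_wrt (\<ge>) ys" "\<forall>y\<in>set ys. y \<le> a"
        and bd: "\<bar>a\<bar> \<le> int k" "\<forall>y\<in>set ys. \<bar>y\<bar> \<le> int k"
        and cov: "\<forall>v\<in>{1..int k - 1}. v \<in> abs ` set (a # ys)"
        using xs unfolding e Mset_def by auto
      show "xs \<in> Cons (int k) ` Mset n k \<union> Nset (Suc n) k"
      proof (cases "a = int k")
        case True
        have "\<forall>v\<in>{1..int k - 1}. v \<in> abs ` set ys"
        proof
          fix v assume v: "v \<in> {1..int k - 1}"
          then obtain x where x: "x \<in> set (a # ys)" "v = \<bar>x\<bar>" using cov by blast
          have "x \<noteq> a" using x v True by auto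
          thus "v \<in> abs ` set ys" using x by auto
        qed
        hence "ys \<in> Mset n k" using len srt bd unfolding Mset_def by auto
        thus ?thesis using e True by blast
      next
        case False
        hence "a < int k" using bd by linarith
        hence "int k \<notin> set xs" using srt(2) unfolding e by force
        thus ?thesis using xs unfolding Nset_def by blast
      qed
    qed
    show "Cons (int k) ` Mset n k \<union> Nset (Suc n) k \<subseteq> Mset (Suc n) k"
    proof
      fix xs assume "xs \<in> Cons (int k) ` Mset n k \<union> Nset (Suc n) k"
      thus "xs \<in> Mset (Suc n) k"
      proof
        assume "xs \<in> Cons (int k) ` Mset n k"
        then obtain ys where ys: "ys \<in> Mset n k" "xs = int k # ys" by blast
        have "\<forall>y\<in>set ys. y \<le> int k" using ys(1) unfolding Mset_def by (auto simp: abs_le_iff)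
        thus ?thesis using ys unfolding Mset_def by auto
      next
        assume "xs \<in> Nset (Suc n) k" thus ?thesis unfolding Nset_def by blast
      qed
    qed
  qed
  show "Cons (int k) ` Mset n k \<inter> Nset (Suc n) k = {}" unfolding Nset_def by auto
qed

lemma N_snoc: assumes k: "k \<ge> 1"
  shows "Nset (Suc n) k = (\<lambda>ys. ys @ [- int k]) ` Nset n k \<union> Lset (Suc n) (k - 1)"
    "(\<lambda>ys. ys @ [- int k]) ` Nset n k \<inter> Lset (Suc n) (k - 1) = {}"
proof -
  have ik: "int (k - 1) = int k - 1" using k by simp
  show "Nset (Suc n) k = (\<lambda>ys. ys @ [- int k]) ` Nset n k \<union> Lset (Suc n) (k - 1)"
  proof
    show "Nset (Suc n) k \<subseteq> (\<lambda>ys. ys @ [- int k]) ` Nset n k \<union> Lset (Suc n) (k - 1)"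
    proof
      fix xs assume xs: "xs \<in> Nset (Suc n) k"
      hence "xs \<noteq> []" unfolding Nset_def Mset_def by auto
      then obtain ys b where e: "xs = ys @ [b]" by (cases xs rule: rev_cases) auto
      have len: "length ys = n" and srt: "sorted_wrt (\<ge>) ys" "\<forall>y\<in>set ys. b \<le> y"
        and bd: "\<bar>b\<bar> \<le> int k" "\<forall>y\<in>set ys. \<bar>y\<bar> \<le> int k"
        and cov: "\<forall>v\<in>{1..int k - 1}. v \<in> abs ` set (ys @ [b])"
        and nk: "int k \<notin> set (ys @ [b])"
        using xs unfolding e Nset_def Mset_def by (auto simp: sorted_wrt_append)
      show "xs \<in> (\<lambda>ys. ys @ [- int k]) ` Nset n k \<union> Lset (Suc n) (k - 1)"
      proof (cases "b = - int k")
        case True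
        have "\<forall>v\<in>{1..int k - 1}. v \<in> abs ` set ys"
        proof
          fix v assume v: "v \<in> {1..int k - 1}"
          then obtain x where x: "x \<in> set (ys @ [b])" "v = \<bar>x\<bar>" using cov by blast
          have "x \<noteq> b" using x v True by auto
          thus "v \<in> abs ` set ys" using x by auto
        qed
        hence "ys \<in> Nset n k" using len srt bd nk unfolding Nset_def Mset_def by auto
        thus ?thesis using e True by blast
      next
        case False
        hence bk: "- int k < b" using bd by linarith
        have "\<forall>x\<in>set xs. \<bar>x\<bar> \<le> int (k - 1)"
        proof
          fix x assume x: "x \<in> set xs"
          have "b \<le> x" using x srt(2) unfolding e by auto
          moreover have "x \<noteq> int k" using x nk unfolding e by auto
          moreover have "\<bar>x\<bar> \<le> int k" using x bd unfolding e by auto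
          ultimately show "\<bar>x\<bar> \<le> int (k - 1)" using bk ik by linarith
        qed
        moreover have "\<forall>v\<in>{1..int (k - 1)}. v \<in> abs ` set xs" using cov ik unfolding e by simp
        ultimately have "xs \<in> Lset (Suc n) (k - 1)" using xs unfolding Lset_def Nset_def Mset_def by blast
        thus ?thesis by blast
      qed
    qed
    show "(\<lambda>ys. ys @ [- int k]) ` Nset n k \<union> Lset (Suc n) (k - 1) \<subseteq> Nset (Suc n) k"
    proof
      fix xs assume "xs \<in> (\<lambda>ys. ys @ [- int k]) ` Nset n k \<union> Lset (Suc n) (k - 1)"
      thus "xs \<in> Nset (Suc n) k"
      proof
        assume "xs \<in> (\<lambda>ys. ys @ [- int k]) ` Nset n k"
        then obtain ys where ys: "ys \<in> Nset n k" "xs = ys @ [- int k]" by blast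
        have "\<forall>y\<in>set ys. - int k \<le> y" using ys(1) unfolding Nset_def Mset_def by (auto simp: abs_le_iff)
        thus ?thesis using ys k unfolding Nset_def Mset_def by (auto simp: sorted_wrt_append)
      next
        assume L: "xs \<in> Lset (Suc n) (k - 1)"
        have "\<forall>x\<in>set xs. \<bar>x\<bar> \<le> int k" using L ik unfolding Lset_def by force
        moreover have "int k \<notin> set xs" using L ik unfolding Lset_def by force
        ultimately show ?thesis using L ik unfolding Lset_def Nset_def Mset_def by auto
      qed
    qed
  qed
  show "(\<lambda>ys. ys @ [- int k]) ` Nset n k \<inter> Lset (Suc n) (k - 1) = {}"
  proof (rule ccontr)
    assume "(\<lambda>ys. ys @ [- int k]) ` Nset n k \<inter> Lset (Suc n) (k - 1) \<noteq> {}"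
    then obtain ys where "ys @ [- int k] \<in> Lset (Suc n) (k - 1)" by blast
    hence "\<bar>- int k\<bar> \<le> int (k - 1)" unfolding Lset_def by auto
    thus False using ik by simp
  qed
qed

lemma card_M: "k \<ge> 1 \<Longrightarrow> card (Mset n k) = card (Lset n k) + card (Lset n (k - 1))"
  using M_split[of k n] card_Un_disjoint[OF finite_L finite_L] by simp

lemma card_M_Suc: "k \<ge> 1 \<Longrightarrow> card (Mset (Suc n) k) = card (Mset n k) + card (Nset (Suc n) k)"
proof -
  assume k: "k \<ge> 1"
  have "card (Cons (int k) ` Mset n k) = card (Mset n k)" by (rule card_image) simp
  moreover have "finite (Cons (int k) ` Mset n k)" using finite_M by simp
  ultimately show ?thesis using M_cons[OF k, of n] card_Un_disjoint[OF _ finite_N] by simp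
qed

lemma card_N_Suc: "k \<ge> 1 \<Longrightarrow> card (Nset (Suc n) k) = card (Nset n k) + card (Lset (Suc n) (k - 1))"
proof -
  assume k: "k \<ge> 1"
  have "card ((\<lambda>ys. ys @ [- int k]) ` Nset n k) = card (Nset n k)" by (rule card_image) (simp add: inj_on_def)
  moreover have "finite ((\<lambda>ys. ys @ [- int k]) ` Nset n k)" using finite_N by simp
  ultimately show ?thesis using N_snoc[OF k, of n] card_Un_disjoint[OF _ finite_L] by simp
qed

lemma rec_nat: assumes k: "k \<ge> 1"
  shows "int (card (Lset (Suc (Suc n)) k)) = 2 * int (card (Lset (Suc n) k)) - int (card (Lset n k))
        + 2 * int (card (Lset (Suc n) (k - 1))) - int (card (Lset n (k - 1)))"
proof -
  have a: "card (Mset (Suc (Suc n)) k) = card (Mset (Suc n) k) + card (Nset (Suc (Suc n)) k)" using card_M_Suc[OF k] .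
  have b: "card (Nset (Suc (Suc n)) k) = card (Nset (Suc n) k) + card (Lset (Suc (Suc n)) (k - 1))" using card_N_Suc[OF k] .
  have c: "card (Mset (Suc n) k) = card (Mset n k) + card (Nset (Suc n) k)" using card_M_Suc[OF k] .
  show ?thesis using a b c card_M[OF k, of n] card_M[OF k, of "Suc n"] card_M[OF k, of "Suc (Suc n)"] by simp
qed

lemma L0: "Lset n 0 = {replicate n 0}"
proof
  show "Lset n 0 \<subseteq> {replicate n 0}"
  proof
    fix xs assume "xs \<in> Lset n 0"
    hence "length xs = n" "\<forall>x\<in>set xs. x = 0" unfolding Lset_def by auto
    thus "xs \<in> {replicate n 0}" by (simp add: replicate_eqI)
  qed
  show "{replicate n 0} \<subseteq> Lset n 0" unfolding Lset_def by (auto simp: sorted_wrt_iff_nth_less)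
qed

lemma L_big: assumes "k > n" shows "Lset n k = {}"
proof (rule ccontr)
  assume "Lset n k \<noteq> {}"
  then obtain xs where xs: "xs \<in> Lset n k" by blast
  have "int ` {1..k} \<subseteq> abs ` set xs" using xs unfolding Lset_def by force
  hence "card (int ` {1..k}) \<le> card (abs ` set xs)" by (rule card_mono[rotated]) simp
  moreover have "card (int ` {1..k}) = k" by (subst card_image) auto
  moreover have "card (abs ` set xs) \<le> n"
    using card_image_le[of "set xs" abs] card_length[of xs] xs unfolding Lset_def by simp
  ultimately show False using assms by simp
qed

lemma vec_Wcl: assumes "xs \<in> Lset n k" shows "vec xs \<in> Wcl n"
proof -
  have len: "length xs = n" and srt: "sorted_wrt (\<ge>) xs" using assms unfolding Lset_def by auto
  have "vec xs j \<le> vec xs i" if "i \<le> j" "j < n" for i j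
  proof (cases "i = j")
    case False
    hence "xs ! j \<le> xs ! i" using srt that len unfolding sorted_wrt_iff_nth_less by auto
    thus ?thesis using that len unfolding vec_def by simp
  qed simp
  thus ?thesis unfolding Wcl_def using vec_Rn[OF len] by auto
qed

lemma faces_k: "{F \<in> faces n. span_dim F = k} = (\<lambda>xs. FC n (vec xs)) ` Lset n k"
proof
  show "{F \<in> faces n. span_dim F = k} \<subseteq> (\<lambda>xs. FC n (vec xs)) ` Lset n k"
  proof
    fix F assume F: "F \<in> {F \<in> faces n. span_dim F = k}"
    then obtain x where x: "x \<in> Wcl n" "F = FC n x" unfolding faces_eq by blast
    have L: "nl n x \<in> Lset n (card (AA n x))" by (rule nl_L[OF x(1)])
    have e: "F = FC n (vec (nl n x))" using x(2) same_FC[OF same_nl] by simp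
    have "span_dim F = card (AA n x)" using dim_FC[OF L] e by simp
    hence "card (AA n x) = k" using F by simp
    thus "F \<in> (\<lambda>xs. FC n (vec xs)) ` Lset n k" using L e by blast
  qed
  show "(\<lambda>xs. FC n (vec xs)) ` Lset n k \<subseteq> {F \<in> faces n. span_dim F = k}"
    using vec_Wcl dim_FC unfolding faces_eq by blast
qed

lemma num_faces_L: "num_faces n k = card (Lset n k)"
proof -
  have "inj_on (\<lambda>xs. FC n (vec xs)) (Lset n k)"
  proof (rule inj_onI)
    fix xs ys assume a: "xs \<in> Lset n k" "ys \<in> Lset n k" "FC n (vec xs) = FC n (vec ys)"
    have "length xs = n" "length ys = n" using a unfolding Lset_def by auto
    hence "same n (vec xs) (vec ys)" using FC_same[OF vec_Rn vec_Rn a(3)] by simp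
    thus "xs = ys" using L_inj a by blast
  qed
  thus ?thesis unfolding num_faces_def faces_k by (rule card_image)
qed

theorem corollary1p5:
  fixes n k :: int
  assumes "n \<ge> 2"
  shows "g n k = 2 * g (n - 1) k - g (n - 2) k + 2 * g (n - 1) (k - 1) - g (n - 2) (k - 1)"
proof -
  define F where "F = (\<lambda>n k. if n < 0 \<or> k < 0 then 0 else int (card (Lset (nat n) (nat k))))"
  have gF: "g a b = F a b" for a b
  proof (cases "a < 0 \<or> b < 0")
    case True thus ?thesis unfolding g_def F_def by auto
  next
    case False
    show ?thesis
    proof (cases "b > a")
      case True
      hence "nat b > nat a" using False by simp
      thus ?thesis using True False L_big unfolding g_def F_def by simp
    next
      case f2: False
      thus ?thesis using False unfolding g_def F_def num_faces_L by simp
    qed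
  qed
  define p where "p = nat n - 2"
  have p: "n = int p + 2" using assms unfolding p_def by linarith
  have n1: "nat (n - 1) = Suc p" "nat n = Suc (Suc p)" "nat (n - 2) = p" using p by auto
  have nn: "\<not> n < 0" "\<not> n - 1 < 0" "\<not> n - 2 < 0" using assms by auto
  have "F n k = 2 * F (n - 1) k - F (n - 2) k + 2 * F (n - 1) (k - 1) - F (n - 2) (k - 1)"
  proof (cases "k < 0")
    case True thus ?thesis unfolding F_def by simp
  next
    case kn: False
    show ?thesis
    proof (cases "k = 0")
      case True
      have "F n k = 1" "F (n - 1) k = 1" "F (n - 2) k = 1" "F (n - 1) (k - 1) = 0" "F (n - 2) (k - 1) = 0"
        unfolding F_def using True nn by (simp_all add: L0)
      thus ?thesis by simp
    next
      case False
      define q where "q = nat k"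
      have q: "k = int q" "q \<ge> 1" using kn False unfolding q_def by auto
      have k1: "nat (k - 1) = q - 1" using q by auto
      have e1: "F n k = int (card (Lset (Suc (Suc p)) q))" unfolding F_def using nn kn n1 q_def by simp
      have e2: "F (n - 1) k = int (card (Lset (Suc p) q))" unfolding F_def using nn kn n1 q_def by simp
      have e3: "F (n - 2) k = int (card (Lset p q))" unfolding F_def using nn kn n1 q_def by simp
      have km: "\<not> k - 1 < 0" using q by simp
      have e4: "F (n - 1) (k - 1) = int (card (Lset (Suc p) (q - 1)))" unfolding F_def using nn km n1 k1 by simp
      have e5: "F (n - 2) (k - 1) = int (card (Lset p (q - 1)))" unfolding F_def using nn km n1 k1 by simp
      show ?thesis unfolding e1 e2 e3 e4 e5 using rec_nat[OF q(2), of p] .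
    qed
  qed
  thus ?thesis unfolding gF .
qed

end
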